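(* Let $\mathfrak h=\mathfrak{su}(p',q')$, $0<p'<q'$, with root data as in the context, let $\mathfrak h^0\subset\mathfrak h$ be an $\mathrm{ad}\,\mathfrak b_H$-invariant subalgebra, let $\mu\in\mathfrak a_H^*$, and let $s$ be a symmetric bilinear form on $\mathfrak h/\mathfrak h^0$ with $s(\mathrm{ad}A\,x,y)+s(x,\mathrm{ad}A\,y)=-2\mu(A)\,s(x,y)$ for all $A\in\mathfrak a_H$, $x,y\in\mathfrak h/\mathfrak h^0$. Suppose that for some $i'$, $\bar{\mathfrak h}_{-\alpha_{i'}}\ne0$. (1) If $p'>1$ and $\bar{\mathfrak h}_{-\alpha_{j'}}\ne0$ for some $j'\ne i'$, then $s$ has a totally isotropic subspace of dimension greater than $2p'-1$, unless $p'=2$, $\mu=\alpha_1+\alpha_2$, and $s$ has a totally isotropic subspace of dimension $3$. (2) If $p'>1$ and $\mathfrak h_{-\alpha_{j'}}\subset\mathfrak h^0$ for all $j'\ne i'$, then $s$ has a totally isotropic subspace of dimension at least $2p'-1$; and if the maximal totally isotropic subspaces of $s$ have dimension exactly $2p'-1$, then $2\mu=2\alpha_{i'}+\alpha'$ with $\alpha'\in\{0,\ \alpha_{j'},\ \alpha_{j'}+\alpha_{k'}: j',k'\ne i'\}$.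
   Context: Root data for $\mathfrak h=\mathfrak{su}(p',q')$: maximal $\mathbf R$-split $\mathfrak a_H$, restricted root system $BC_{p'}$ with short roots $\alpha_1,\dots,\alpha_{p'}$, positive roots $\{\alpha_{k'}\}\cup\{\alpha_{i'}-\alpha_{j'}:i'<j'\}\cup\{\alpha_{i'}+\alpha_{j'}\}$ (including $2\alpha_{i'}$); $\dim\mathfrak h_{\pm\alpha_{k'}}=2(q'-p')$, $\dim\mathfrak h_{\pm\alpha_{i'}\pm\alpha_{j'}}=2$ ($i'\ne j'$), $\dim\mathfrak h_{\pm2\alpha_{i'}}=1$; $\mathfrak b_H=\mathfrak a_H\oplus\bigoplus_{\alpha>0}\mathfrak h_\alpha$. For a subspace $\mathfrak l\subset\mathfrak h$, $\bar{\mathfrak l}$ denotes its image in $\mathfrak h/\mathfrak h^0$. A subspace $W$ is totally isotropic if $s(W,W)=0$. *)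

theory Defs
  imports "HOL-Analysis.Analysis"
begin

text \<open>Concrete model of su(p',q') with q' = p' + r, r >= 1.
 Index set of C^(p'+r+p'):  Inl i  (i in 'p),  Inr (Inl a) (a in 'r),  Inr (Inr i) (i in 'p).
 Hermitian form J of signature (q',p'): hyperbolic pairs (Inl i, Inr (Inr i)) and a positive
 definite block on the 'r indices.  su = { X | X^* J + J X = 0, tr X = 0 } (a real Lie algebra).\<close>

type_synonym ('p, 'r) idx = "'p + ('r + 'p)"
type_synonym ('p, 'r) mat = "complex ^ (('p, 'r) idx) ^ (('p, 'r) idx)"

definition Jform :: "('p::finite, 'r::finite) mat" where
  "Jform = (\<chi> u v. (case (u, v) of
      (Inl i, Inr (Inr j)) \<Rightarrow> (if i = j then 1 else 0)
    | (Inr (Inr i), Inl j) \<Rightarrow> (if i = j then 1 else 0)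
    | (Inr (Inl a), Inr (Inl b)) \<Rightarrow> (if a = b then 1 else 0)
    | _ \<Rightarrow> 0))"

definition ctrans :: "('p::finite, 'r::finite) mat \<Rightarrow> ('p, 'r) mat" where
  "ctrans X = (\<chi> u v. cnj (X $ v $ u))"

definition mtrace :: "('p::finite, 'r::finite) mat \<Rightarrow> complex" where
  "mtrace X = (\<Sum>u\<in>UNIV. X $ u $ u)"

definition su :: "('p::finite, 'r::finite) mat set" where
  "su = {X. ctrans X ** Jform + Jform ** X = 0 \<and> mtrace X = 0}"

definition lbr :: "('p::finite, 'r::finite) mat \<Rightarrow> ('p, 'r) mat \<Rightarrow> ('p, 'r) mat" where
  "lbr X Y = X ** Y - Y ** X"

text \<open>The maximal R-split abelian subalgebra a_H = { aH t | t }, with alpha_i (aH t) = t i.\<close>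
definition aH :: "('p::finite \<Rightarrow> real) \<Rightarrow> ('p, 'r::finite) mat" where
  "aH t = (\<chi> u v. if u = v then (case u of Inl i \<Rightarrow> complex_of_real (t i)
                                        | Inr (Inr i) \<Rightarrow> complex_of_real (- t i)
                                        | Inr (Inl _) \<Rightarrow> 0) else 0)"

text \<open>Elements of a_H^* are identified with 'p => real via lambda(aH t) = sum_i lambda i * t i;
 alpha_i is the i-th coordinate functional.\<close>
definition pair :: "('p::finite \<Rightarrow> real) \<Rightarrow> ('p \<Rightarrow> real) \<Rightarrow> real" where
  "pair l t = (\<Sum>i\<in>UNIV. l i * t i)"

definition alpha :: "'p \<Rightarrow> ('p \<Rightarrow> real)" where
  "alpha i = (\<lambda>j. if j = i then 1 else 0)"

definition rootspace :: "('p::finite \<Rightarrow> real) \<Rightarrow> ('p, 'r::finite) mat set" where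
  "rootspace l = {X \<in> su. \<forall>t. lbr (aH t) X = pair l t *\<^sub>R X}"

definition pos_roots :: "('p::{finite,linorder} \<Rightarrow> real) set" where
  "pos_roots = {alpha k | k. True} \<union> {(\<lambda>m. alpha i m - alpha j m) | i j. i < j}
              \<union> {(\<lambda>m. alpha i m + alpha j m) | i j. i < j} \<union> {(\<lambda>j. 2 * alpha i j) | i. True}"

definition bH :: "('p::{finite,linorder}, 'r::finite) mat set" where
  "bH = span (range aH \<union> (\<Union>l\<in>pos_roots. rootspace l))"

definition is_subalg :: "('p::finite, 'r::finite) mat set \<Rightarrow> bool" where
  "is_subalg S \<longleftrightarrow> subspace S \<and> S \<subseteq> su \<and> (\<forall>x\<in>S. \<forall>y\<in>S. lbr x y \<in> S)"

definition bH_invariant :: "('p::{finite,linorder}, 'r::finite) mat set \<Rightarrow> bool" where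
  "bH_invariant S \<longleftrightarrow> (\<forall>B\<in>bH. \<forall>x\<in>S. lbr B x \<in> S)"

text \<open>A symmetric bilinear form on su/h0, represented as a symmetric real-bilinear form on su
 having h0 in its radical.\<close>
definition quot_sym_form :: "('p::finite, 'r::finite) mat set \<Rightarrow> (('p, 'r) mat \<Rightarrow> ('p, 'r) mat \<Rightarrow> real) \<Rightarrow> bool" where
  "quot_sym_form h0 s \<longleftrightarrow>
     (\<forall>x\<in>su. \<forall>y\<in>su. s x y = s y x)
   \<and> (\<forall>x\<in>su. \<forall>y\<in>su. \<forall>z\<in>su. \<forall>a b::real. s (a *\<^sub>R x + b *\<^sub>R y) z = a * s x z + b * s y z)
   \<and> (\<forall>x\<in>h0. \<forall>y\<in>su. s x y = 0)"

text \<open>The quotient su/h0 has a totally isotropic subspace of dimension d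
 (lifted: subspaces W with h0 <= W <= su and dim W - dim h0 = d).\<close>
definition has_iso_dim :: "('p::finite, 'r::finite) mat set \<Rightarrow> (('p, 'r) mat \<Rightarrow> ('p, 'r) mat \<Rightarrow> real) \<Rightarrow> nat \<Rightarrow> bool" where
  "has_iso_dim h0 s d \<longleftrightarrow> (\<exists>W. subspace W \<and> h0 \<subseteq> W \<and> W \<subseteq> su
       \<and> (\<forall>x\<in>W. \<forall>y\<in>W. s x y = 0) \<and> dim W = dim h0 + d)"

end

theory Submission
  imports Defs
begin

definition sg :: "('p::finite, 'r::finite) idx \<Rightarrow> ('p, 'r) idx" where
  "sg u = (case u of Inl i \<Rightarrow> Inr (Inr i) | Inr (Inl a) \<Rightarrow> Inr (Inl a) | Inr (Inr i) \<Rightarrow> Inl i)"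

lemma sg_simps[simp]: "sg (Inl i) = Inr (Inr i)" "sg (Inr (Inl a)) = Inr (Inl a)" "sg (Inr (Inr i)) = Inl i"
  by (simp_all add: sg_def)

lemma sg_sg[simp]: "sg (sg u) = u"
  by (cases u rule: sum.exhaust; auto split: sum.splits simp: sg_def)

lemma sg_eq_iff: "(v = sg u) = (u = sg v)"
  by (metis sg_sg)

lemma Jform_entry: "(Jform :: ('p::finite,'r::finite) mat) $ u $ v = (if v = sg u then 1 else 0)"
  unfolding Jform_def sg_def by (auto split: sum.splits)

lemma J_mult: "((Jform :: ('p::finite,'r::finite) mat) ** X) $ u $ v = X $ (sg u) $ v"
proof -
  have "((Jform :: ('p::finite,'r::finite) mat) ** X) $ u $ v = (\<Sum>k\<in>UNIV. Jform $ u $ k * X $ k $ v)"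
    by (simp add: matrix_matrix_mult_def)
  also have "\<dots> = (\<Sum>k\<in>UNIV. if k = sg u then X $ k $ v else 0)"
    by (rule sum.cong) (auto simp: Jform_entry)
  also have "\<dots> = X $ (sg u) $ v" by simp
  finally show ?thesis .
qed

lemma ctJ_mult: "(ctrans X ** (Jform :: ('p::finite,'r::finite) mat)) $ u $ v = cnj (X $ (sg v) $ u)"
proof -
  have "(ctrans X ** (Jform :: ('p::finite,'r::finite) mat)) $ u $ v = (\<Sum>k\<in>UNIV. ctrans X $ u $ k * Jform $ k $ v)"
    by (simp add: matrix_matrix_mult_def)
  also have "\<dots> = (\<Sum>k\<in>UNIV. if k = sg v then cnj (X $ k $ u) else 0)"
    by (rule sum.cong) (auto simp: Jform_entry ctrans_def sg_eq_iff)
  also have "\<dots> = cnj (X $ (sg v) $ u)" by simp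
  finally show ?thesis .
qed

lemma su_iff: "X \<in> (su :: ('p::finite,'r::finite) mat set) \<longleftrightarrow>
   (\<forall>u v. X $ (sg u) $ v + cnj (X $ (sg v) $ u) = 0) \<and> mtrace X = 0"
proof -
  have "(ctrans X ** Jform + Jform ** X = 0) \<longleftrightarrow> (\<forall>u v. X $ (sg u) $ v + cnj (X $ (sg v) $ u) = 0)"
    by (simp add: vec_eq_iff ctJ_mult J_mult add.commute)
  then show ?thesis unfolding su_def by simp
qed

lemma sum_idx: "(\<Sum>w\<in>(UNIV::('p::finite,'r::finite) idx set). f w) =
   (\<Sum>k\<in>UNIV. f (Inl k)) + (\<Sum>a\<in>UNIV. f (Inr (Inl a))) + (\<Sum>k\<in>UNIV. f (Inr (Inr k)))"
proof -
  have "(\<Sum>w\<in>(UNIV::('p::finite,'r::finite) idx set). f w) = (\<Sum>k\<in>UNIV. f (Inl k)) + (\<Sum>b\<in>(UNIV::('r+'p) set). f (Inr b))"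
    by (simp add: UNIV_Plus_UNIV[symmetric] sum.Plus del: UNIV_Plus_UNIV)
  also have "(\<Sum>b\<in>(UNIV::('r+'p) set). f (Inr b)) = (\<Sum>a\<in>UNIV. f (Inr (Inl a))) + (\<Sum>k\<in>UNIV. f (Inr (Inr k)))"
    by (simp add: UNIV_Plus_UNIV[symmetric] sum.Plus del: UNIV_Plus_UNIV)
  finally show ?thesis by (simp add: add.assoc)
qed

lemma ifmult: "(if P then x else (0::'a::mult_zero)) * (if Q then y else 0) = (if P \<and> Q then x * y else 0)"
  by simp

definition Zv :: "'p \<Rightarrow> ('r \<Rightarrow> complex) \<Rightarrow> ('p::finite,'r::finite) mat" where
 "Zv i z = (\<chi> u v. case (u, v) of (Inr (Inl a), Inl i') \<Rightarrow> if i' = i then z a else 0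
     | (Inr (Inr i'), Inr (Inl a)) \<Rightarrow> if i' = i then - cnj (z a) else 0 | _ \<Rightarrow> 0)"

definition Qv :: "'p \<Rightarrow> 'p \<Rightarrow> complex \<Rightarrow> ('p::finite,'r::finite) mat" where
 "Qv i k w = (\<chi> u v. case (u, v) of (Inl k', Inl i') \<Rightarrow> if k' = k \<and> i' = i then w else 0
     | (Inr (Inr i'), Inr (Inr k')) \<Rightarrow> if k' = k \<and> i' = i then - cnj w else 0 | _ \<Rightarrow> 0)"


definition Xv :: "'p \<Rightarrow> ('r \<Rightarrow> complex) \<Rightarrow> ('p::finite,'r::finite) mat" where
 "Xv k x = (\<chi> u v. case (u, v) of (Inl k', Inr (Inl a)) \<Rightarrow> if k' = k then x a else 0
     | (Inr (Inl a), Inr (Inr k')) \<Rightarrow> if k' = k then - cnj (x a) else 0 | _ \<Rightarrow> 0)"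

definition Dv :: "'p \<Rightarrow> real \<Rightarrow> ('p::finite,'r::finite) mat" where
 "Dv i r = (\<chi> u v. case (u, v) of (Inr (Inr i'), Inl i'') \<Rightarrow> if i' = i \<and> i'' = i then \<i> * of_real r else 0
     | _ \<Rightarrow> 0)"

definition Pv :: "'p \<Rightarrow> 'p \<Rightarrow> complex \<Rightarrow> ('p::finite,'r::finite) mat" where
 "Pv i k w = (\<chi> u v. case (u, v) of (Inr (Inr i'), Inl k') \<Rightarrow>
        (if i' = i \<and> k' = k then w else 0) + (if i' = k \<and> k' = i then - cnj w else 0)
     | _ \<Rightarrow> 0)"

lemma brk_ZQ: "k \<noteq> i \<Longrightarrow> lbr (Zv k x) (Qv i k w) = (Zv i (\<lambda>a. x a * w) :: ('p::finite,'r::finite) mat)"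
  unfolding lbr_def
  apply (simp add: vec_eq_iff matrix_matrix_mult_def sum_idx Zv_def Qv_def)
  apply (intro allI)
  subgoal for u v
    apply (cases u rule: sum.exhaust; cases v rule: sum.exhaust)
    apply (auto split: sum.splits simp: ifmult)
    done
  done

lemma brk_XD: "lbr (Xv i x) (Dv i r) = (Zv i (\<lambda>a. - (\<i> * of_real r) * cnj (x a)) :: ('p::finite,'r::finite) mat)"
  unfolding lbr_def
  apply (simp add: vec_eq_iff matrix_matrix_mult_def sum_idx Zv_def Xv_def Dv_def)
  apply (intro allI)
  subgoal for u v
    apply (cases u rule: sum.exhaust; cases v rule: sum.exhaust)
    apply (auto split: sum.splits simp: ifmult)
    done
  done

lemma brk_XP: "k \<noteq> i \<Longrightarrow> lbr (Xv k x) (Pv i k w) = (Zv i (\<lambda>a. cnj (x a * w)) :: ('p::finite,'r::finite) mat)"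
  unfolding lbr_def
  apply (simp add: vec_eq_iff matrix_matrix_mult_def sum_idx Zv_def Xv_def Pv_def)
  apply (intro allI)
  subgoal for u v
    apply (cases u rule: sum.exhaust; cases v rule: sum.exhaust)
    apply (auto split: sum.splits simp: ifmult distrib_left distrib_right sum.distrib)
     apply (rule sum.neutral; auto)+
    done
  done


definition dg :: "('p::finite \<Rightarrow> real) \<Rightarrow> ('p, 'r::finite) idx \<Rightarrow> real" where
  "dg t u = (case u of Inl k \<Rightarrow> t k | Inr (Inl a) \<Rightarrow> 0 | Inr (Inr k) \<Rightarrow> - t k)"

lemma dg_simps[simp]: "dg t (Inl k) = t k" "dg t (Inr (Inl a)) = 0" "dg t (Inr (Inr k)) = - t k"
  by (simp_all add: dg_def)

lemma aH_entry: "(aH t :: ('p::finite,'r::finite) mat) $ u $ v = (if u = v then of_real (dg t u) else 0)"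
  unfolding aH_def dg_def by (auto split: sum.splits)

lemma aH_mult: "((aH t :: ('p::finite,'r::finite) mat) ** X) $ u $ v = of_real (dg t u) * X $ u $ v"
proof -
  have "((aH t :: ('p::finite,'r::finite) mat) ** X) $ u $ v = (\<Sum>k\<in>UNIV. aH t $ u $ k * X $ k $ v)"
    by (simp add: matrix_matrix_mult_def)
  also have "\<dots> = (\<Sum>k\<in>UNIV. if k = u then of_real (dg t u) * X $ k $ v else 0)"
    by (rule sum.cong) (auto simp: aH_entry)
  also have "\<dots> = of_real (dg t u) * X $ u $ v" by simp
  finally show ?thesis .
qed

lemma mult_aH: "(X ** (aH t :: ('p::finite,'r::finite) mat)) $ u $ v = X $ u $ v * of_real (dg t v)"
proof -
  have "(X ** (aH t :: ('p::finite,'r::finite) mat)) $ u $ v = (\<Sum>k\<in>UNIV. X $ u $ k * aH t $ k $ v)"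
    by (simp add: matrix_matrix_mult_def)
  also have "\<dots> = (\<Sum>k\<in>UNIV. if k = v then X $ u $ k * of_real (dg t v) else 0)"
    by (rule sum.cong) (auto simp: aH_entry)
  also have "\<dots> = X $ u $ v * of_real (dg t v)" by simp
  finally show ?thesis .
qed

lemma lbr_aH_entry: "lbr (aH t) X $ u $ v = of_real (dg t u - dg t v) * (X :: ('p::finite,'r::finite) mat) $ u $ v"
  unfolding lbr_def by (simp add: aH_mult mult_aH algebra_simps)

lemma scaleR_entry: "((c::real) *\<^sub>R (X :: ('p::finite,'r::finite) mat)) $ u $ v = of_real c * X $ u $ v"
  unfolding vector_scaleR_component by (simp add: scaleR_conv_of_real)

lemma cmult_cancel: "((of_real A :: complex) * x = of_real B * x) \<longleftrightarrow> (x = 0 \<or> A = B)"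
  by auto

lemma lbr_eig_iff: "(lbr (aH t) X = c *\<^sub>R (X :: ('p::finite,'r::finite) mat)) \<longleftrightarrow>
    (\<forall>u v. X $ u $ v = 0 \<or> dg t u - dg t v = c)"
proof -
  have "(lbr (aH t) X = c *\<^sub>R X) \<longleftrightarrow> (\<forall>u v. lbr (aH t) X $ u $ v = (c *\<^sub>R X) $ u $ v)"
    by (simp add: vec_eq_iff)
  also have "\<dots> \<longleftrightarrow> (\<forall>u v. of_real (dg t u - dg t v) * X $ u $ v = of_real c * X $ u $ v)"
    by (simp only: lbr_aH_entry scaleR_entry)
  also have "\<dots> \<longleftrightarrow> (\<forall>u v. X $ u $ v = 0 \<or> dg t u - dg t v = c)"
    by (simp only: cmult_cancel)
  finally show ?thesis .
qed

lemma rootspace_iff: "X \<in> rootspace l \<longleftrightarrow> X \<in> su \<and>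
   (\<forall>t u v. (X :: ('p::finite,'r::finite) mat) $ u $ v = 0 \<or> dg t u - dg t v = pair l t)"
  unfolding rootspace_def by (auto simp: lbr_eig_iff)

lemma pair_alpha: "pair (alpha k) t = t k"
proof -
  have "pair (alpha k) t = (\<Sum>i\<in>UNIV. if i = k then t i else 0)"
    unfolding pair_def alpha_def by (rule sum.cong) auto
  then show ?thesis by simp
qed

lemma pair_delta: "pair l (\<lambda>x. if x = m then 1 else 0) = l m"
proof -
  have "pair l (\<lambda>x. if x = m then 1 else 0) = (\<Sum>i\<in>UNIV. if i = m then l i else 0)"
    unfolding pair_def by (rule sum.cong) auto
  then show ?thesis by simp
qed

lemma pair_lin: "pair (\<lambda>m. a * alpha i m + b * alpha k m) t = a * t i + b * t k"
proof -
  have "pair (\<lambda>m. a * alpha i m + b * alpha k m) t = a * pair (alpha i) t + b * pair (alpha k) t"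
    unfolding pair_def by (simp add: algebra_simps sum.distrib sum_distrib_left)
  then show ?thesis by (simp add: pair_alpha)
qed

lemma mtrace_idx: "mtrace (X :: ('p::finite,'r::finite) mat) = (\<Sum>k\<in>UNIV. X $ Inl k $ Inl k) +
   (\<Sum>a\<in>UNIV. X $ Inr (Inl a) $ Inr (Inl a)) + (\<Sum>k\<in>UNIV. X $ Inr (Inr k) $ Inr (Inr k))"
  unfolding mtrace_def by (rule sum_idx)

lemma su_add: "X \<in> su \<Longrightarrow> Y \<in> su \<Longrightarrow> X + Y \<in> (su :: ('p::finite,'r::finite) mat set)"
proof -
  assume a: "X \<in> su" "Y \<in> su"
  have "(X + Y) $ (sg u) $ v + cnj ((X + Y) $ (sg v) $ u) =
      (X $ (sg u) $ v + cnj (X $ (sg v) $ u)) + (Y $ (sg u) $ v + cnj (Y $ (sg v) $ u))" for u v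
    by (simp add: algebra_simps)
  moreover have "mtrace (X + Y) = mtrace X + mtrace Y"
    unfolding mtrace_def by (simp add: sum.distrib)
  ultimately show ?thesis using a unfolding su_iff by simp
qed

lemma su_scale: "X \<in> su \<Longrightarrow> (c::real) *\<^sub>R X \<in> (su :: ('p::finite,'r::finite) mat set)"
proof -
  assume a: "X \<in> su"
  have "(c *\<^sub>R X) $ (sg u) $ v + cnj ((c *\<^sub>R X) $ (sg v) $ u) =
      of_real c * (X $ (sg u) $ v + cnj (X $ (sg v) $ u))" for u v
    by (simp only: scaleR_entry) (simp add: algebra_simps)
  moreover have "mtrace (c *\<^sub>R X) = of_real c * mtrace X"
    unfolding mtrace_def by (simp only: scaleR_entry sum_distrib_left)
  ultimately show ?thesis using a unfolding su_iff by simp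
qed

lemma su_zero: "0 \<in> (su :: ('p::finite,'r::finite) mat set)"
  unfolding su_iff mtrace_def by simp

lemma su_subspace: "subspace (su :: ('p::finite,'r::finite) mat set)"
  unfolding subspace_def using su_add su_scale su_zero by blast

lemma rootspace_subspace: "subspace (rootspace l :: ('p::finite,'r::finite) mat set)"
  unfolding subspace_def
proof (intro conjI ballI allI)
  show "0 \<in> (rootspace l :: ('p::finite,'r::finite) mat set)"
    using su_zero by (auto simp: rootspace_iff)
next
  fix x y :: "('p,'r) mat" assume "x \<in> rootspace l" "y \<in> rootspace l"
  then show "x + y \<in> rootspace l"
    unfolding rootspace_iff using su_add by (metis (no_types, lifting) add.right_neutral vector_add_component)
next
  fix c :: real and x :: "('p,'r) mat" assume "x \<in> rootspace l"
  then show "c *\<^sub>R x \<in> rootspace l"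
    unfolding rootspace_iff using su_scale by (auto simp: scaleR_entry)
qed


lemma idx_cases[case_names L M R]:
  fixes u :: "('p::finite,'r::finite) idx"
  obtains (L) k where "u = Inl k" | (M) a where "u = Inr (Inl a)" | (R) k where "u = Inr (Inr k)"
  by (metis sum.exhaust)

lemma pattZ:
  fixes u v :: "('p::finite,'r::finite) idx"
  assumes "\<forall>t. dg t u - dg t v = - t i"
  shows "(\<exists>a. u = Inr (Inl a) \<and> v = Inl i) \<or> (\<exists>a. u = Inr (Inr i) \<and> v = Inr (Inl a))"
proof -
  have d: "dg (\<lambda>x. if x = m then 1 else 0) u - dg (\<lambda>x. if x = m then 1 else 0) v = - (if i = m then 1 else 0)" for m
    using assms by auto
  show ?thesis
  proof (cases u rule: idx_cases)
    case (L k)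
    then show ?thesis
    proof (cases v rule: idx_cases)
      case (L k') then show ?thesis using d[of i] d[of k] d[of k'] \<open>u = _\<close> by (auto split: if_splits)
    next
      case (M a') then show ?thesis using d[of i] d[of k] \<open>u = _\<close> by (auto split: if_splits)
    next
      case (R k') then show ?thesis using d[of i] d[of k] d[of k'] \<open>u = _\<close> by (auto split: if_splits)
    qed
  next
    case (M a)
    then show ?thesis
    proof (cases v rule: idx_cases)
      case (L k') then show ?thesis using d[of i] d[of k'] \<open>u = _\<close> by (auto split: if_splits)
    next
      case (M a') then show ?thesis using d[of i] \<open>u = _\<close> by (auto split: if_splits)
    next
      case (R k') then show ?thesis using d[of i] d[of k'] \<open>u = _\<close> by (auto split: if_splits)
    qed
  next
    case (R k)
    then show ?thesis
    proof (cases v rule: idx_cases)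
      case (L k') then show ?thesis using d[of i] d[of k] d[of k'] \<open>u = _\<close> by (auto split: if_splits)
    next
      case (M a') then show ?thesis using d[of i] d[of k] \<open>u = _\<close> by (auto split: if_splits)
    next
      case (R k') then show ?thesis using d[of i] d[of k] d[of k'] \<open>u = _\<close> by (auto split: if_splits)
    qed
  qed
qed

lemma pair_negA: "pair (\<lambda>m. - alpha i m) t = - t i"
  using pair_lin[of "-1" i 0 i t] by simp

lemma pair_D: "pair (\<lambda>m. -2 * alpha i m) t = -2 * t i"
  using pair_lin[of "-2" i 0 i t] by simp

lemma pair_P: "pair (\<lambda>m. - alpha i m - alpha k m) t = - t i - t k"
  using pair_lin[of "-1" i "-1" k t] by simp

lemma pair_Q: "pair (\<lambda>m. - alpha i m + alpha k m) t = - t i + t k"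
  using pair_lin[of "-1" i 1 k t] by simp

lemma rootspaceZ_eq:
  assumes "(Z :: ('p::finite,'r::finite) mat) \<in> rootspace (\<lambda>m. - alpha i m)"
  shows "Z = Zv i (\<lambda>a. Z $ Inr (Inl a) $ Inl i)"
proof -
  have su: "Z \<in> su" and e: "\<forall>t. Z $ u $ v = 0 \<or> dg t u - dg t v = - t i" for u v
    using assms unfolding rootspace_iff by (auto simp: pair_negA)
  have z: "Z $ u $ v = 0" if "\<not> ((\<exists>a. u = Inr (Inl a) \<and> v = Inl i) \<or> (\<exists>a. u = Inr (Inr i) \<and> v = Inr (Inl a)))" for u v
    using e[of u v] pattZ[of u v i] that by blast
  have r: "Z $ Inr (Inr i) $ Inr (Inl a) = - cnj (Z $ Inr (Inl a) $ Inl i)" for a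
  proof -
    have "Z $ sg (Inl i) $ Inr (Inl a) + cnj (Z $ sg (Inr (Inl a)) $ Inl i) = 0"
      using su unfolding su_iff by blast
    then show ?thesis by (simp add: eq_neg_iff_add_eq_0)
  qed
  show ?thesis
    unfolding vec_eq_iff
  proof (intro allI)
    fix u v
    show "Z $ u $ v = Zv i (\<lambda>a. Z $ Inr (Inl a) $ Inl i) $ u $ v"
      using z[of u v] r by (cases u rule: idx_cases; cases v rule: idx_cases) (auto simp: Zv_def)
  qed
qed


lemma pair_D': "pair (\<lambda>m. - (2 * alpha i m)) t = -2 * t i"
  using pair_D[of i t] by simp

lemma pair_Q': "pair (\<lambda>m. alpha k m - alpha i m) t = t k - t i"
  using pair_Q[of i k t] by simp

lemma Zv_su: "((Zv i z) :: ('p::finite,'r::finite) mat) \<in> su"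
  unfolding su_iff mtrace_idx
proof (intro conjI allI)
  fix u v :: "('p,'r) idx"
  show "(Zv i z) $ sg u $ v + cnj ((Zv i z) $ sg v $ u) = 0"
     by (cases u rule: idx_cases; cases v rule: idx_cases) (auto simp: Zv_def)
next
  show "(\<Sum>kk\<in>UNIV. (Zv i z) $ Inl kk $ Inl kk) + (\<Sum>aa\<in>UNIV. (Zv i z) $ Inr (Inl aa) $ Inr (Inl aa)) + (\<Sum>kk\<in>UNIV. (Zv i z) $ Inr (Inr kk) $ Inr (Inr kk)) = 0"
     by (simp add: Zv_def)
qed

lemma Zv_root: "((Zv i z) :: ('p::finite,'r::finite) mat) \<in> rootspace (\<lambda>m. - alpha i m)"
  unfolding rootspace_iff
proof (intro conjI allI)
  show "(Zv i z) \<in> su"  by (rule Zv_su)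
next
  fix t and u v :: "('p,'r) idx"
  show "(Zv i z) $ u $ v = 0 \<or> dg t u - dg t v = pair (\<lambda>m. - alpha i m) t"
     by (cases u rule: idx_cases; cases v rule: idx_cases) (auto simp: Zv_def pair_negA)
qed

lemma Xv_su: "((Xv k x) :: ('p::finite,'r::finite) mat) \<in> su"
  unfolding su_iff mtrace_idx
proof (intro conjI allI)
  fix u v :: "('p,'r) idx"
  show "(Xv k x) $ sg u $ v + cnj ((Xv k x) $ sg v $ u) = 0"
     by (cases u rule: idx_cases; cases v rule: idx_cases) (auto simp: Xv_def)
next
  show "(\<Sum>kk\<in>UNIV. (Xv k x) $ Inl kk $ Inl kk) + (\<Sum>aa\<in>UNIV. (Xv k x) $ Inr (Inl aa) $ Inr (Inl aa)) + (\<Sum>kk\<in>UNIV. (Xv k x) $ Inr (Inr kk) $ Inr (Inr kk)) = 0"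
     by (simp add: Xv_def)
qed

lemma Xv_root: "((Xv k x) :: ('p::finite,'r::finite) mat) \<in> rootspace (alpha k)"
  unfolding rootspace_iff
proof (intro conjI allI)
  show "(Xv k x) \<in> su"  by (rule Xv_su)
next
  fix t and u v :: "('p,'r) idx"
  show "(Xv k x) $ u $ v = 0 \<or> dg t u - dg t v = pair (alpha k) t"
     by (cases u rule: idx_cases; cases v rule: idx_cases) (auto simp: Xv_def pair_alpha)
qed

lemma Dv_su: "((Dv i r) :: ('p::finite,'r::finite) mat) \<in> su"
  unfolding su_iff mtrace_idx
proof (intro conjI allI)
  fix u v :: "('p,'r) idx"
  show "(Dv i r) $ sg u $ v + cnj ((Dv i r) $ sg v $ u) = 0"
     by (cases u rule: idx_cases; cases v rule: idx_cases) (auto simp: Dv_def)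
next
  show "(\<Sum>kk\<in>UNIV. (Dv i r) $ Inl kk $ Inl kk) + (\<Sum>aa\<in>UNIV. (Dv i r) $ Inr (Inl aa) $ Inr (Inl aa)) + (\<Sum>kk\<in>UNIV. (Dv i r) $ Inr (Inr kk) $ Inr (Inr kk)) = 0"
     by (simp add: Dv_def)
qed

lemma Dv_root: "((Dv i r) :: ('p::finite,'r::finite) mat) \<in> rootspace (\<lambda>m. -2 * alpha i m)"
  unfolding rootspace_iff
proof (intro conjI allI)
  show "(Dv i r) \<in> su"  by (rule Dv_su)
next
  fix t and u v :: "('p,'r) idx"
  show "(Dv i r) $ u $ v = 0 \<or> dg t u - dg t v = pair (\<lambda>m. -2 * alpha i m) t"
     by (cases u rule: idx_cases; cases v rule: idx_cases) (auto simp: Dv_def pair_D pair_D')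
qed

lemma Pv_su: assumes "k \<noteq> i" shows "((Pv i k w) :: ('p::finite,'r::finite) mat) \<in> su"
  unfolding su_iff mtrace_idx
proof (intro conjI allI)
  fix u v :: "('p,'r) idx"
  show "(Pv i k w) $ sg u $ v + cnj ((Pv i k w) $ sg v $ u) = 0"
    using assms by (cases u rule: idx_cases; cases v rule: idx_cases) (auto simp: Pv_def)
next
  show "(\<Sum>kk\<in>UNIV. (Pv i k w) $ Inl kk $ Inl kk) + (\<Sum>aa\<in>UNIV. (Pv i k w) $ Inr (Inl aa) $ Inr (Inl aa)) + (\<Sum>kk\<in>UNIV. (Pv i k w) $ Inr (Inr kk) $ Inr (Inr kk)) = 0"
    using assms by (simp add: Pv_def)
qed

lemma Pv_root: assumes "k \<noteq> i" shows "((Pv i k w) :: ('p::finite,'r::finite) mat) \<in> rootspace (\<lambda>m. - alpha i m - alpha k m)"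
  unfolding rootspace_iff
proof (intro conjI allI)
  show "(Pv i k w) \<in> su" using assms by (rule Pv_su)
next
  fix t and u v :: "('p,'r) idx"
  show "(Pv i k w) $ u $ v = 0 \<or> dg t u - dg t v = pair (\<lambda>m. - alpha i m - alpha k m) t"
    using assms by (cases u rule: idx_cases; cases v rule: idx_cases) (auto simp: Pv_def pair_P)
qed

lemma Qv_su: assumes "k \<noteq> i" shows "((Qv i k w) :: ('p::finite,'r::finite) mat) \<in> su"
  unfolding su_iff mtrace_idx
proof (intro conjI allI)
  fix u v :: "('p,'r) idx"
  show "(Qv i k w) $ sg u $ v + cnj ((Qv i k w) $ sg v $ u) = 0"
    using assms by (cases u rule: idx_cases; cases v rule: idx_cases) (auto simp: Qv_def)
next
  show "(\<Sum>kk\<in>UNIV. (Qv i k w) $ Inl kk $ Inl kk) + (\<Sum>aa\<in>UNIV. (Qv i k w) $ Inr (Inl aa) $ Inr (Inl aa)) + (\<Sum>kk\<in>UNIV. (Qv i k w) $ Inr (Inr kk) $ Inr (Inr kk)) = 0"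
  proof -
    have ne: "(kk = k \<and> kk = i) = False" for kk
      using assms by auto
    show ?thesis by (simp add: Qv_def ne)
  qed
qed

lemma Qv_root: assumes "k \<noteq> i" shows "((Qv i k w) :: ('p::finite,'r::finite) mat) \<in> rootspace (\<lambda>m. - alpha i m + alpha k m)"
  unfolding rootspace_iff
proof (intro conjI allI)
  show "(Qv i k w) \<in> su" using assms by (rule Qv_su)
next
  fix t and u v :: "('p,'r) idx"
  show "(Qv i k w) $ u $ v = 0 \<or> dg t u - dg t v = pair (\<lambda>m. - alpha i m + alpha k m) t"
    using assms by (cases u rule: idx_cases; cases v rule: idx_cases) (auto simp: Qv_def pair_Q pair_Q')
qed


lemma aH_bH: "(aH t :: ('p::{finite,linorder},'r::finite) mat) \<in> bH"
  unfolding bH_def by (rule span_base) auto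

lemma root_bH: "l \<in> pos_roots \<Longrightarrow> X \<in> rootspace l \<Longrightarrow> (X :: ('p::{finite,linorder},'r::finite) mat) \<in> bH"
  unfolding bH_def by (rule span_base) auto

lemma alpha_pos: "alpha k \<in> (pos_roots :: ('p::{finite,linorder} \<Rightarrow> real) set)"
  unfolding pos_roots_def by auto

lemma Xv_bH: "(Xv k x :: ('p::{finite,linorder},'r::finite) mat) \<in> bH"
  by (rule root_bH[OF alpha_pos Xv_root])

lemma inv_br: "bH_invariant h0 \<Longrightarrow> B \<in> bH \<Longrightarrow> x \<in> h0 \<Longrightarrow> lbr B x \<in> h0"
  unfolding bH_invariant_def by blast

lemma GD:
  fixes h0 :: "('p::{finite,linorder},'r::finite) mat set"
  assumes inv: "bH_invariant h0" and nz: "\<not> rootspace (\<lambda>m. - alpha i m) \<subseteq> h0"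
    and D: "Dv i r \<in> h0"
  shows "r = 0"
proof (rule ccontr)
  assume r: "r \<noteq> 0"
  have "Z \<in> h0" if Z: "Z \<in> rootspace (\<lambda>m. - alpha i m)" for Z
  proof -
    define z where "z = (\<lambda>a. Z $ Inr (Inl a) $ Inl i)"
    define x where "x = (\<lambda>a. cnj (z a / (- (\<i> * of_real r))))"
    have "(\<lambda>a. - (\<i> * of_real r) * cnj (x a)) = z"
      using r by (auto simp: x_def)
    then have "lbr (Xv i x) (Dv i r) = Zv i z" by (simp add: brk_XD)
    also have "\<dots> = Z" using rootspaceZ_eq[OF Z] by (simp add: z_def)
    finally show ?thesis using inv_br[OF inv Xv_bH[of i x] D] by simp
  qed
  then show False using nz by blast
qed

lemma GP:
  fixes h0 :: "('p::{finite,linorder},'r::finite) mat set"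
  assumes inv: "bH_invariant h0" and nz: "\<not> rootspace (\<lambda>m. - alpha i m) \<subseteq> h0"
    and ki: "k \<noteq> i" and P: "Pv i k w \<in> h0"
  shows "w = 0"
proof (rule ccontr)
  assume w: "w \<noteq> 0"
  have "Z \<in> h0" if Z: "Z \<in> rootspace (\<lambda>m. - alpha i m)" for Z
  proof -
    define z where "z = (\<lambda>a. Z $ Inr (Inl a) $ Inl i)"
    define x where "x = (\<lambda>a. cnj (z a) / w)"
    have "(\<lambda>a. cnj (x a * w)) = z"
      using w by (auto simp: x_def)
    then have "lbr (Xv k x) (Pv i k w) = Zv i z" by (simp add: brk_XP[OF ki])
    also have "\<dots> = Z" using rootspaceZ_eq[OF Z] by (simp add: z_def)
    finally show ?thesis using inv_br[OF inv Xv_bH[of k x] P] by simp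
  qed
  then show False using nz by blast
qed

lemma GQ:
  fixes h0 :: "('p::{finite,linorder},'r::finite) mat set"
  assumes sub: "is_subalg h0" and nz: "\<not> rootspace (\<lambda>m. - alpha i m) \<subseteq> h0"
    and ki: "k \<noteq> i" and hk: "rootspace (\<lambda>m. - alpha k m) \<subseteq> h0" and Q: "Qv i k w \<in> h0"
  shows "w = 0"
proof (rule ccontr)
  assume w: "w \<noteq> 0"
  have "Z \<in> h0" if Z: "Z \<in> rootspace (\<lambda>m. - alpha i m)" for Z
  proof -
    define z where "z = (\<lambda>a. Z $ Inr (Inl a) $ Inl i)"
    define x where "x = (\<lambda>a. z a / w)"
    have "(\<lambda>a. x a * w) = z"
      using w by (auto simp: x_def)
    then have "lbr (Zv k x) (Qv i k w) = Zv i z" by (simp add: brk_ZQ[OF ki])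
    also have "\<dots> = Z" using rootspaceZ_eq[OF Z] by (simp add: z_def)
    finally show ?thesis
      using sub hk Zv_root[of k x] Q unfolding is_subalg_def by blast
  qed
  then show False using nz by blast
qed


lemma dim_extend:
  fixes h0 :: "'a::euclidean_space set" and f :: "'k \<Rightarrow> 'a"
  assumes sub: "subspace h0" and fin: "finite I"
    and ind: "\<And>c. (\<Sum>x\<in>I. c x *\<^sub>R f x) \<in> h0 \<Longrightarrow> \<forall>x\<in>I. c x = 0"
  shows "dim {a + b | a b. a \<in> h0 \<and> b \<in> span (f ` I)} = dim h0 + card I"
proof -
  have z: "0 \<in> h0" using sub by (simp add: subspace_0)
  have inj: "inj_on f I"
  proof (rule inj_onI, rule ccontr)
    fix x y assume xy: "x \<in> I" "y \<in> I" "f x = f y" "x \<noteq> y"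
    define c where "c = (\<lambda>z. if z = x then 1 else if z = y then -1 else (0::real))"
    have "(\<Sum>z\<in>I. c z *\<^sub>R f z) = (\<Sum>z\<in>I. (if z = x then f x else 0) - (if z = y then f y else 0))"
    proof (rule sum.cong)
      fix z assume "z \<in> I"
      show "c z *\<^sub>R f z = (if z = x then f x else 0) - (if z = y then f y else 0)"
        using xy(4) by (cases "z = x"; cases "z = y") (simp_all add: c_def)
    qed simp
    also have "\<dots> = f x - f y" using xy(1,2) fin by (simp add: sum_subtractf)
    also have "\<dots> = 0" using xy(3) by simp
    finally have "(\<Sum>z\<in>I. c z *\<^sub>R f z) \<in> h0" using z by simp
    then have "\<forall>x\<in>I. c x = 0" by (rule ind)
    then have "c x = 0" using xy(1) by blast
    then show False by (simp add: c_def)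
  qed
  have re: "(\<Sum>v\<in>f ` I. u v *\<^sub>R v) = (\<Sum>x\<in>I. u (f x) *\<^sub>R f x)" for u
    by (simp add: sum.reindex[OF inj])
  have indep: "independent (f ` I)"
    unfolding independent_explicit
  proof (intro conjI allI impI ballI)
    show "finite (f ` I)" using fin by simp
  next
    fix c v assume c0: "(\<Sum>v\<in>f ` I. c v *\<^sub>R v) = 0" and v: "v \<in> f ` I"
    have "(\<Sum>x\<in>I. c (f x) *\<^sub>R f x) \<in> h0" using c0 z re[of c] by simp
    then have "\<forall>x\<in>I. c (f x) = 0" by (rule ind)
    then show "c v = 0" using v by blast
  qed
  have dspan: "dim (span (f ` I)) = card I"
    using dim_span_eq_card_independent[OF indep] card_image[OF inj] by simp
  have int: "h0 \<inter> span (f ` I) = {0}"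
  proof
    show "h0 \<inter> span (f ` I) \<subseteq> {0}"
    proof
      fix v assume v: "v \<in> h0 \<inter> span (f ` I)"
      have "v \<in> range (\<lambda>u. \<Sum>w\<in>f ` I. u w *\<^sub>R w)"
        using span_finite[of "f ` I"] fin v by simp
      then obtain u where u: "v = (\<Sum>w\<in>f ` I. u w *\<^sub>R w)" by blast
      have "(\<Sum>x\<in>I. u (f x) *\<^sub>R f x) \<in> h0" using v u re[of u] by simp
      then have "\<forall>x\<in>I. u (f x) = 0" by (rule ind)
      then have "(\<Sum>x\<in>I. u (f x) *\<^sub>R f x) = 0" by simp
      then show "v \<in> {0}" using u re[of u] by simp
    qed
  next
    show "{0} \<subseteq> h0 \<inter> span (f ` I)" using z span_zero by auto
  qed
  have "dim {x + y |x y. x \<in> h0 \<and> y \<in> span (f ` I)} + dim (h0 \<inter> span (f ` I)) = dim h0 + dim (span (f ` I))"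
    by (rule dim_sums_Int[OF sub subspace_span])
  then show ?thesis using int dspan by simp
qed

lemma separate:
  fixes h0 :: "('p::{finite,linorder},'r::finite) mat set" and w :: "'k \<Rightarrow> 'p \<Rightarrow> real"
  assumes inv: "bH_invariant h0" and sub: "subspace h0"
  shows "finite K \<Longrightarrow> inj_on w K \<Longrightarrow> (\<forall>x\<in>K. y x \<in> rootspace (w x)) \<Longrightarrow> (\<Sum>x\<in>K. y x) \<in> h0
     \<Longrightarrow> \<forall>x\<in>K. y x \<in> h0"
proof (induction "card K" arbitrary: K y rule: less_induct)
  case less
  show ?case
  proof
    fix x0 assume x0: "x0 \<in> K"
    show "y x0 \<in> h0"
    proof (cases "K = {x0}")
      case True
      then show ?thesis using less.prems by simp
    next
      case False
      then obtain x1 where x1: "x1 \<in> K" "x1 \<noteq> x0" using x0 by auto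
      then have "w x1 \<noteq> w x0" using less.prems(2) x0 by (meson inj_onD)
      then obtain m where m: "w x1 m \<noteq> w x0 m" by auto
      define t where "t = (\<lambda>x::'p. if x = m then (1::real) else 0)"
      define y' where "y' = (\<lambda>x. (w x m - w x1 m) *\<^sub>R y x)"
      have br: "lbr (aH t) (y x) = w x m *\<^sub>R y x" if "x \<in> K" for x
        using less.prems(3) that unfolding rootspace_def t_def by (auto simp: pair_delta)
      have lsum: "lbr (aH t) (\<Sum>x\<in>K. y x) = (\<Sum>x\<in>K. lbr (aH t) (y x))"
        by (simp add: vec_eq_iff lbr_aH_entry sum_component sum_distrib_left)
      have "(\<Sum>x\<in>K - {x1}. y' x) = (\<Sum>x\<in>K. y' x)"
        using x1 less.prems(1) by (intro sum.mono_neutral_left) (auto simp: y'_def)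
      also have "\<dots> = lbr (aH t) (\<Sum>x\<in>K. y x) - w x1 m *\<^sub>R (\<Sum>x\<in>K. y x)"
        unfolding lsum y'_def using br
        by (simp add: scaleR_diff_left sum_subtractf scaleR_sum_right)
      also have "\<dots> \<in> h0"
        using inv_br[OF inv aH_bH less.prems(4)] less.prems(4) sub
        by (simp add: subspace_diff subspace_scale)
      finally have s1: "(\<Sum>x\<in>K - {x1}. y' x) \<in> h0" .
      have "\<forall>x\<in>K - {x1}. y' x \<in> h0"
      proof (rule less.hyps[of "K - {x1}" y'])
        show "card (K - {x1}) < card K" using x1 less.prems(1) by (rule_tac card_Diff1_less) auto
        show "finite (K - {x1})" using less.prems(1) by simp
        show "inj_on w (K - {x1})" using less.prems(2) by (rule inj_on_subset) auto
        show "\<forall>x\<in>K - {x1}. y' x \<in> rootspace (w x)"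
          using less.prems(3) unfolding y'_def by (auto intro: subspace_scale[OF rootspace_subspace])
        show "(\<Sum>x\<in>K - {x1}. y' x) \<in> h0" by (rule s1)
      qed
      then have "y' x0 \<in> h0" using x0 x1 by blast
      then have "(w x0 m - w x1 m) *\<^sub>R y x0 \<in> h0" by (simp only: y'_def)
      from subspace_scale[OF sub this, of "inverse (w x0 m - w x1 m)"]
      have "inverse (w x0 m - w x1 m) *\<^sub>R ((w x0 m - w x1 m) *\<^sub>R y x0) \<in> h0" .
      moreover have ne: "w x0 m - w x1 m \<noteq> 0" using m by simp
      have "inverse (w x0 m - w x1 m) *\<^sub>R ((w x0 m - w x1 m) *\<^sub>R y x0) = y x0"
        by (simp only: scaleR_scaleR left_inverse[OF ne] scaleR_one)
      ultimately show ?thesis by (simp only:)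
    qed
  qed
qed


lemma s_props:
  assumes "quot_sym_form h0 s"
  shows s_sym: "x \<in> su \<Longrightarrow> y \<in> su \<Longrightarrow> s x y = s y x"
    and s_add: "x \<in> su \<Longrightarrow> y \<in> su \<Longrightarrow> z \<in> su \<Longrightarrow> s (x + y) z = s x z + s y z"
    and s_scale: "x \<in> su \<Longrightarrow> z \<in> su \<Longrightarrow> s (c *\<^sub>R x) z = c * s x z"
    and s_rad: "x \<in> h0 \<Longrightarrow> z \<in> su \<Longrightarrow> s x z = 0"
proof -
  have lin: "\<forall>x\<in>su. \<forall>y\<in>su. \<forall>z\<in>su. \<forall>a b::real. s (a *\<^sub>R x + b *\<^sub>R y) z = a * s x z + b * s y z"
    using assms unfolding quot_sym_form_def by (elim conjE)
  show "x \<in> su \<Longrightarrow> y \<in> su \<Longrightarrow> s x y = s y x" using assms unfolding quot_sym_form_def by blast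
  show "x \<in> su \<Longrightarrow> y \<in> su \<Longrightarrow> z \<in> su \<Longrightarrow> s (x + y) z = s x z + s y z"
  proof -
    assume "x \<in> su" "y \<in> su" "z \<in> su"
    then have "s (1 *\<^sub>R x + 1 *\<^sub>R y) z = 1 * s x z + 1 * s y z" using lin[rule_format, of x y z 1 1] by blast
    then show ?thesis by simp
  qed
  show "x \<in> su \<Longrightarrow> z \<in> su \<Longrightarrow> s (c *\<^sub>R x) z = c * s x z"
  proof -
    assume "x \<in> su" "z \<in> su"
    then have "s (c *\<^sub>R x + 0 *\<^sub>R x) z = c * s x z + 0 * s x z" using lin[rule_format, of x x z c 0] by blast
    then show ?thesis by simp
  qed
  show "x \<in> h0 \<Longrightarrow> z \<in> su \<Longrightarrow> s x z = 0" using assms unfolding quot_sym_form_def by blast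
qed

lemma s_weight:
  fixes s :: "('p::finite,'r::finite) mat \<Rightarrow> ('p,'r) mat \<Rightarrow> real"
  assumes form: "quot_sym_form h0 s"
    and mu_cond: "\<forall>t. \<forall>x\<in>su. \<forall>y\<in>su. s (lbr (aH t) x) y + s x (lbr (aH t) y) = - 2 * pair mu t * s x y"
    and x: "x \<in> rootspace l" and y: "y \<in> rootspace l'"
    and ne: "(\<lambda>m. l m + l' m) \<noteq> (\<lambda>m. - 2 * mu m)"
  shows "s x y = 0"
proof -
  obtain m where m: "l m + l' m \<noteq> - 2 * mu m" using ne by auto
  define t where "t = (\<lambda>x::'p. if x = m then (1::real) else 0)"
  have xs: "x \<in> su" and ys: "y \<in> su" using x y by (auto simp: rootspace_def)
  have bx: "lbr (aH t) x = l m *\<^sub>R x" using x unfolding rootspace_def t_def by (auto simp: pair_delta)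
  have by': "lbr (aH t) y = l' m *\<^sub>R y" using y unfolding rootspace_def t_def by (auto simp: pair_delta)
  have "s (lbr (aH t) x) y + s x (lbr (aH t) y) = - 2 * pair mu t * s x y"
    using mu_cond xs ys by blast
  moreover have "s (lbr (aH t) x) y = l m * s x y" using bx s_scale[OF form xs ys] by simp
  moreover have "s x (lbr (aH t) y) = l' m * s x y"
    using by' s_scale[OF form ys xs] s_sym[OF form xs ys] s_sym[OF form xs su_scale[OF ys]] by simp
  moreover have "pair mu t = mu m" unfolding t_def by (rule pair_delta)
  ultimately have "(l m + l' m + 2 * mu m) * s x y = 0" by (simp add: algebra_simps)
  then show ?thesis using m by simp
qed

lemma span_s_zero:
  fixes s :: "('p::finite,'r::finite) mat \<Rightarrow> ('p,'r) mat \<Rightarrow> real"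
  assumes form: "quot_sym_form h0 s" and F: "F \<subseteq> su" and b: "b \<in> su"
    and z: "\<forall>f\<in>F. s f b = 0" and y: "y \<in> span F"
  shows "y \<in> su \<and> s y b = 0"
  using y
proof (rule span_induct)
  show "subspace {y. y \<in> su \<and> s y b = 0}"
    unfolding subspace_def
  proof (intro conjI ballI allI)
    show "0 \<in> {y. y \<in> su \<and> s y b = 0}"
      using s_scale[OF form b b, of 0] su_zero by simp
  next
    fix x y assume "x \<in> {y. y \<in> su \<and> s y b = 0}" "y \<in> {y. y \<in> su \<and> s y b = 0}"
    then show "x + y \<in> {y. y \<in> su \<and> s y b = 0}" using s_add[OF form _ _ b] su_add by auto
  next
    fix c :: real and x assume "x \<in> {y. y \<in> su \<and> s y b = 0}"
    then show "c *\<^sub>R x \<in> {y. y \<in> su \<and> s y b = 0}" using s_scale[OF form _ b] su_scale by auto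
  qed
next
  fix x assume "x \<in> F" then show "x \<in> su \<and> s x b = 0" using F z by auto
qed

lemma span_su: "F \<subseteq> su \<Longrightarrow> span F \<subseteq> (su :: ('p::finite,'r::finite) mat set)"
proof -
  assume "F \<subseteq> su"
  then have "span F \<subseteq> span su" by (rule span_mono)
  also have "span su = (su :: ('p::finite,'r::finite) mat set)" using su_subspace by simp
  finally show ?thesis .
qed

lemma iso_W:
  fixes s :: "('p::finite,'r::finite) mat \<Rightarrow> ('p,'r) mat \<Rightarrow> real"
  assumes form: "quot_sym_form h0 s" and h0: "h0 \<subseteq> su" and F: "F \<subseteq> su"
    and z: "\<forall>f\<in>F. \<forall>g\<in>F. s f g = 0"
    and a: "a \<in> {x + y | x y. x \<in> h0 \<and> y \<in> span F}" and b: "b \<in> {x + y | x y. x \<in> h0 \<and> y \<in> span F}"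
  shows "s a b = 0"
proof -
  obtain x y where a': "a = x + y" "x \<in> h0" "y \<in> span F" using a by auto
  obtain x' y' where b': "b = x' + y'" "x' \<in> h0" "y' \<in> span F" using b by auto
  have ysu: "y \<in> su" "y' \<in> su" using span_su[OF F] a' b' by auto
  have xsu: "x \<in> su" "x' \<in> su" using h0 a' b' by auto
  have bsu: "b \<in> su" using b' xsu ysu su_add by simp
  have fy: "\<forall>f\<in>F. s f y = 0"
  proof
    fix f assume f: "f \<in> F"
    have "\<forall>g\<in>F. s g f = 0" using z f by blast
    then have "s y f = 0" using span_s_zero[OF form F _ _ a'(3)] F f by auto
    then show "s f y = 0" using s_sym[OF form] F f ysu by auto
  qed
  have yy: "s y' y = 0" using span_s_zero[OF form F ysu(1) fy b'(3)] by simp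
  have "s a b = s x b + s y b" using a' s_add[OF form xsu(1) ysu(1) bsu] by simp
  also have "s x b = 0" using s_rad[OF form a'(2) bsu] .
  also have "s y b = s b y" using s_sym[OF form ysu(1) bsu] .
  also have "s b y = s x' y + s y' y" using b' s_add[OF form xsu(2) ysu(2) ysu(1)] by simp
  also have "s x' y = 0" using s_rad[OF form b'(2) ysu(1)] .
  finally show ?thesis using yy by simp
qed


lemma iso_keys:
  fixes h0 :: "('p::{finite,linorder},'r::finite) mat set" and F :: "'k \<Rightarrow> complex \<Rightarrow> ('p,'r) mat"
    and w :: "'k \<Rightarrow> 'p \<Rightarrow> real" and s :: "('p,'r) mat \<Rightarrow> ('p,'r) mat \<Rightarrow> real"
  assumes subalg: "is_subalg h0" and inv: "bH_invariant h0" and form: "quot_sym_form h0 s"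
    and mu_cond: "\<forall>t. \<forall>x\<in>su. \<forall>y\<in>su. s (lbr (aH t) x) y + s x (lbr (aH t) y) = - 2 * pair mu t * s x y"
    and fin: "finite K" and K2: "K2 \<subseteq> K"
    and root: "\<And>k z. k \<in> K \<Longrightarrow> F k z \<in> rootspace (w k)"
    and lin: "\<And>k a b. k \<in> K \<Longrightarrow> F k (of_real a * 1 + of_real b * \<i>) = a *\<^sub>R F k 1 + b *\<^sub>R F k \<i>"
    and winj: "inj_on w K"
    and grp: "\<And>k z. k \<in> K \<Longrightarrow> F k z \<in> h0 \<Longrightarrow> k \<in> K2 \<or> Im z = 0 \<Longrightarrow> z = 0"
    and np: "\<And>k k'. k \<in> K \<Longrightarrow> k' \<in> K \<Longrightarrow> (\<lambda>m. w k m + w k' m) \<noteq> (\<lambda>m. - 2 * mu m)"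
  shows "has_iso_dim h0 s (card K + card K2)"
proof -
  have sub: "subspace h0" and h0su: "h0 \<subseteq> su" using subalg unfolding is_subalg_def by auto
  define I where "I = (\<lambda>k. (k, True)) ` K \<union> (\<lambda>k. (k, False)) ` K2"
  define f where "f = (\<lambda>(k, b). F k (if b then 1 else \<i>))"
  have finK2: "finite K2" using fin K2 finite_subset by auto
  have finI: "finite I" unfolding I_def using fin finK2 by simp
  have cardI: "card I = card K + card K2"
    unfolding I_def
    by (subst card_Un_disjoint) (auto simp: fin finK2 card_image inj_on_def)
  have fI: "x \<in> I \<Longrightarrow> f x \<in> rootspace (w (fst x))" for x
    unfolding I_def f_def using root K2 by auto
  have fsu: "f ` I \<subseteq> su" using fI by (auto simp: rootspace_def)
  have ind: "\<forall>x\<in>I. c x = 0" if c: "(\<Sum>x\<in>I. c x *\<^sub>R f x) \<in> h0" for c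
  proof -
    define zz where "zz = (\<lambda>k. of_real (c (k, True)) * 1 + of_real (if k \<in> K2 then c (k, False) else 0) * \<i>)"
    have "(\<Sum>x\<in>I. c x *\<^sub>R f x) = (\<Sum>x\<in>(\<lambda>k. (k, True)) ` K. c x *\<^sub>R f x) + (\<Sum>x\<in>(\<lambda>k. (k, False)) ` K2. c x *\<^sub>R f x)"
      unfolding I_def using fin finK2 by (subst sum.union_disjoint) auto
    also have "\<dots> = (\<Sum>k\<in>K. c (k, True) *\<^sub>R F k 1) + (\<Sum>k\<in>K2. c (k, False) *\<^sub>R F k \<i>)"
      by (subst sum.reindex, simp add: inj_on_def, subst sum.reindex, simp add: inj_on_def) (simp add: f_def)
    also have "(\<Sum>k\<in>K2. c (k, False) *\<^sub>R F k \<i>) = (\<Sum>k\<in>K. (if k \<in> K2 then c (k, False) else 0) *\<^sub>R F k \<i>)"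
      using fin K2 by (intro sum.mono_neutral_cong_left) auto
    also have "(\<Sum>k\<in>K. c (k, True) *\<^sub>R F k 1) + (\<Sum>k\<in>K. (if k \<in> K2 then c (k, False) else 0) *\<^sub>R F k \<i>)
        = (\<Sum>k\<in>K. F k (zz k))"
      unfolding sum.distrib[symmetric]
    proof (rule sum.cong)
      fix k assume k: "k \<in> K"
      show "c (k, True) *\<^sub>R F k 1 + (if k \<in> K2 then c (k, False) else 0) *\<^sub>R F k \<i> = F k (zz k)"
        unfolding zz_def by (rule lin[OF k, symmetric])
    qed simp
    finally have "(\<Sum>k\<in>K. F k (zz k)) \<in> h0" using c by simp
    then have all: "\<forall>k\<in>K. F k (zz k) \<in> h0"
      using separate[OF inv sub fin winj, of "\<lambda>k. F k (zz k)"] root by blast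
    have z0: "zz k = 0" if "k \<in> K" for k
      using grp[OF that] all that by (auto simp: zz_def)
    show ?thesis
    proof
      fix x assume "x \<in> I"
      then show "c x = 0"
      proof (cases x)
        case (Pair k b)
        then show ?thesis using \<open>x \<in> I\<close> z0 K2 unfolding I_def
          by (cases b) (auto simp: zz_def complex_eq_iff, metis subsetD)
      qed
    qed
  qed
  define W where "W = {a + b | a b. a \<in> h0 \<and> b \<in> span (f ` I)}"
  have "subspace W" unfolding W_def by (rule subspace_sums[OF sub subspace_span])
  moreover have "h0 \<subseteq> W" unfolding W_def by (force intro: span_zero)
  moreover have "W \<subseteq> su" unfolding W_def using h0su span_su[OF fsu] su_add by blast
  moreover have "\<forall>x\<in>W. \<forall>y\<in>W. s x y = 0"
  proof (intro ballI)
    fix x y assume "x \<in> W" "y \<in> W"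
    moreover have "\<forall>a\<in>f ` I. \<forall>b\<in>f ` I. s a b = 0"
    proof (intro ballI)
      fix a b assume "a \<in> f ` I" "b \<in> f ` I"
      then obtain x' y' where "x' \<in> I" "y' \<in> I" "a = f x'" "b = f y'" by auto
      moreover have "fst x' \<in> K" "fst y' \<in> K" using \<open>x' \<in> I\<close> \<open>y' \<in> I\<close> K2 unfolding I_def by auto
      ultimately show "s a b = 0"
        using s_weight[OF form mu_cond fI fI np] by blast
    qed
    ultimately show "s x y = 0" using iso_W[OF form h0su fsu] unfolding W_def by blast
  qed
  moreover have "dim W = dim h0 + card (I)"
    unfolding W_def by (rule dim_extend[OF sub finI ind])
  ultimately show ?thesis unfolding has_iso_dim_def cardI by blast
qed


lemma ent_lin: "(if A then of_real a * z + of_real b * z' else 0) + (if B then - cnj (of_real a * z + of_real b * z') else 0)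
   = of_real a * ((if A then z else 0) + (if B then - cnj z else 0)) + of_real b * ((if A then z' else 0) + (if B then - cnj z' else (0::complex)))"
  by (cases A; cases B) (simp_all add: algebra_simps)

lemma Pv_lin: "Pv i k (of_real a * z + of_real b * z') = a *\<^sub>R Pv i k z + b *\<^sub>R (Pv i k z' :: ('p::finite,'r::finite) mat)"
  unfolding vec_eq_iff
proof (intro allI)
  fix u v :: "('p::finite,'r::finite) idx"
  show "Pv i k (of_real a * z + of_real b * z') $ u $ v = (a *\<^sub>R Pv i k z + b *\<^sub>R Pv i k z') $ u $ v"
    unfolding vector_add_component scaleR_entry
    by (cases u rule: idx_cases; cases v rule: idx_cases) (simp_all only: Pv_def vec_lambda_beta prod.case sum.case ent_lin, simp_all)
qed


lemma Qv_lin: "Qv i k (of_real a * z + of_real b * z') = a *\<^sub>R Qv i k z + b *\<^sub>R (Qv i k z' :: ('p::finite,'r::finite) mat)"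
  unfolding vec_eq_iff
proof (intro allI)
  fix u v :: "('p::finite,'r::finite) idx"
  show "Qv i k (of_real a * z + of_real b * z') $ u $ v = (a *\<^sub>R Qv i k z + b *\<^sub>R Qv i k z') $ u $ v"
    apply (cases u rule: idx_cases; cases v rule: idx_cases)
    apply (simp_all add: Qv_def scaleR_entry distrib_left)
    apply (auto simp: scaleR_conv_of_real mult_ac)
    done
qed

lemma Dv_lin: "Dv i (a * x + b * y) = a *\<^sub>R Dv i x + b *\<^sub>R (Dv i y :: ('p::finite,'r::finite) mat)"
  unfolding vec_eq_iff
proof (intro allI)
  fix u v :: "('p::finite,'r::finite) idx"
  show "Dv i (a * x + b * y) $ u $ v = (a *\<^sub>R Dv i x + b *\<^sub>R Dv i y) $ u $ v"
    apply (cases u rule: idx_cases; cases v rule: idx_cases)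
    apply (simp_all add: Dv_def scaleR_entry distrib_left)
    apply (auto simp: scaleR_conv_of_real mult_ac)
    done
qed

datatype 'p key = KZ | KZj | KD | KP 'p | KPj 'p | KQ 'p

fun Fk :: "'p \<Rightarrow> 'p \<Rightarrow> ('p::finite,'r::finite) mat \<Rightarrow> ('p,'r) mat \<Rightarrow> 'p key \<Rightarrow> complex \<Rightarrow> ('p,'r) mat" where
  "Fk i j Zi Zj KZ z = Re z *\<^sub>R Zi"
| "Fk i j Zi Zj KZj z = Re z *\<^sub>R Zj"
| "Fk i j Zi Zj KD z = Dv i (Re z)"
| "Fk i j Zi Zj (KP k) z = Pv i k z"
| "Fk i j Zi Zj (KPj k) z = Pv j k z"
| "Fk i j Zi Zj (KQ k) z = Qv i k z"

definition wZ :: "'p \<Rightarrow> 'p \<Rightarrow> real" where "wZ i = (\<lambda>m. - alpha i m)"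
definition wD :: "'p \<Rightarrow> 'p \<Rightarrow> real" where "wD i = (\<lambda>m. -2 * alpha i m)"
definition wP :: "'p \<Rightarrow> 'p \<Rightarrow> 'p \<Rightarrow> real" where "wP i k = (\<lambda>m. - alpha i m - alpha k m)"
definition wQ :: "'p \<Rightarrow> 'p \<Rightarrow> 'p \<Rightarrow> real" where "wQ i k = (\<lambda>m. - alpha i m + alpha k m)"

fun wk :: "'p \<Rightarrow> 'p \<Rightarrow> 'p key \<Rightarrow> 'p \<Rightarrow> real" where
  "wk i j KZ = wZ i"
| "wk i j KZj = wZ j"
| "wk i j KD = wD i"
| "wk i j (KP k) = wP i k"
| "wk i j (KPj k) = wP j k"
| "wk i j (KQ k) = wQ i k"

fun valid :: "'p \<Rightarrow> 'p \<Rightarrow> 'p key \<Rightarrow> bool" where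
  "valid i j (KP k) = (k \<noteq> i)"
| "valid i j (KPj k) = (k \<noteq> j)"
| "valid i j (KQ k) = (k \<noteq> i)"
| "valid i j _ = True"

lemma key_lin: "Fk i j Zi Zj x (of_real a * 1 + of_real b * \<i>) = a *\<^sub>R Fk i j Zi Zj x 1 + b *\<^sub>R Fk i j Zi Zj x \<i>"
proof (cases x)
  case KD
  then show ?thesis using Dv_lin[of i a 1 b 0] by simp
next
  case (KP k)
  then show ?thesis using Pv_lin[of i k a 1 b \<i>] by simp
next
  case (KPj k)
  then show ?thesis using Pv_lin[of j k a 1 b \<i>] by simp
next
  case (KQ k)
  then show ?thesis using Qv_lin[of i k a 1 b \<i>] by simp
qed simp_all

lemma key_root:
  assumes "x = KZ \<Longrightarrow> Zi \<in> rootspace (wZ i)" "x = KZj \<Longrightarrow> Zj \<in> rootspace (wZ j)" "valid i j x"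
  shows "Fk i j Zi Zj x z \<in> rootspace (wk i j x)"
  using assms
proof (cases x)
  case KZ then show ?thesis using assms by (simp add: subspace_scale[OF rootspace_subspace])
next
  case KZj then show ?thesis using assms by (simp add: subspace_scale[OF rootspace_subspace])
next
  case KD then show ?thesis using Dv_root by (simp add: wD_def)
next
  case (KP k) then show ?thesis using Pv_root assms by (simp add: wP_def)
next
  case (KPj k) then show ?thesis using Pv_root assms by (simp add: wP_def)
next
  case (KQ k) then show ?thesis using Qv_root assms by (simp add: wQ_def)
qed

lemma key_grp:
  fixes h0 :: "('p::{finite,linorder},'r::finite) mat set"
  assumes subalg: "is_subalg h0" and inv: "bH_invariant h0"
    and Zi: "x = KZ \<Longrightarrow> Zi \<notin> h0" and Zj: "x = KZj \<Longrightarrow> Zj \<notin> h0"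
    and nzi: "\<not> rootspace (\<lambda>m. - alpha i m) \<subseteq> h0"
    and x: "valid i j x"
    and nzj: "\<And>k. x = KPj k \<Longrightarrow> \<not> rootspace (\<lambda>m. - alpha j m) \<subseteq> h0"
    and hq: "\<And>k. x = KQ k \<Longrightarrow> rootspace (\<lambda>m. - alpha k m) \<subseteq> h0"
    and F: "Fk i j Zi Zj x z \<in> h0" and c: "x \<in> range KP \<union> range KPj \<union> range KQ \<or> Im z = 0"
  shows "z = 0"
proof -
  have sub: "subspace h0" using subalg unfolding is_subalg_def by auto
  have scl: "Re z = 0" if "Re z *\<^sub>R Z \<in> h0" "Z \<notin> h0" for Z :: "('p,'r) mat"
  proof (rule ccontr)
    assume "Re z \<noteq> 0"
    then have "Z = inverse (Re z) *\<^sub>R (Re z *\<^sub>R Z)" by simp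
    moreover have "inverse (Re z) *\<^sub>R (Re z *\<^sub>R Z) \<in> h0" using subspace_scale[OF sub that(1)] .
    ultimately have "Z \<in> h0" by simp
    then show False using that(2) by simp
  qed
  show ?thesis
  proof (cases x)
    case KZ then show ?thesis using F c scl[OF _ Zi[OF KZ]] by (auto simp: complex_eq_iff)
  next
    case KZj then show ?thesis using F c scl[OF _ Zj[OF KZj]] by (auto simp: complex_eq_iff)
  next
    case KD then show ?thesis using F c GD[OF inv nzi, of "Re z"] by (auto simp: complex_eq_iff)
  next
    case (KP k') then show ?thesis using F x GP[OF inv nzi, of k' z] by auto
  next
    case (KPj k') then show ?thesis using F x nzj GP[OF inv, of j k' z] by auto
  next
    case (KQ k') then show ?thesis using F x hq GQ[OF subalg nzi, of k' z] by auto
  qed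
qed


lemma wZ_app: "wZ i m = (if m = i then -1 else 0)" by (simp add: wZ_def alpha_def)
lemma wD_app: "wD i m = (if m = i then -2 else 0)" by (simp add: wD_def alpha_def)
lemma wP_app: "wP i k m = (if m = i then -1 else 0) + (if m = k then -1 else 0)" by (simp add: wP_def alpha_def)
lemma wQ_app: "wQ i k m = (if m = i then -1 else 0) + (if m = k then 1 else 0)" by (simp add: wQ_def alpha_def)

fun good :: "'p \<Rightarrow> 'p \<Rightarrow> 'p key \<Rightarrow> bool" where
  "good i j (KP k) = (k \<noteq> i)"
| "good i j (KPj k) = (k \<noteq> i \<and> k \<noteq> j \<and> i \<noteq> j)"
| "good i j (KQ k) = (k \<noteq> i)"
| "good i j KZj = (i \<noteq> j)"
| "good i j _ = True"

definition dec :: "'p \<Rightarrow> 'p \<Rightarrow> ('p \<Rightarrow> real) \<Rightarrow> 'p key" where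
  "dec i j v = (if v i = -2 then KD
     else if (\<exists>k. k \<noteq> i \<and> v k = -1) \<and> v i = -1 then KP (SOME k. k \<noteq> i \<and> v k = -1)
     else if (\<exists>k. k \<noteq> i \<and> v k = 1) then KQ (SOME k. k \<noteq> i \<and> v k = 1)
     else if v i = -1 then KZ
     else if (\<exists>k. k \<noteq> i \<and> k \<noteq> j \<and> v k = -1) then KPj (SOME k. k \<noteq> i \<and> k \<noteq> j \<and> v k = -1)
     else KZj)"

lemma dec_wk: "good i j x \<Longrightarrow> dec i j (wk i j x) = x"
proof (cases x)
  case KZ then show ?thesis by (auto simp: dec_def wZ_app)
next
  case KZj
  assume "good i j x"
  then have "i \<noteq> j" using KZj by simp
  then show ?thesis using KZj by (auto simp: dec_def wZ_app)
next
  case KD then show ?thesis by (auto simp: dec_def wD_app)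
next
  case (KP k)
  assume g: "good i j x"
  then have ki: "k \<noteq> i" using KP by simp
  have "(SOME k'. k' \<noteq> i \<and> wP i k k' = -1) = k"
    by (rule some_equality) (auto simp: wP_app ki split: if_splits)
  then show ?thesis using KP ki by (auto simp: dec_def wP_app)
next
  case (KPj k)
  assume g: "good i j x"
  then have ki: "k \<noteq> i" "k \<noteq> j" "i \<noteq> j" using KPj by auto
  have "(SOME k'. k' \<noteq> i \<and> k' \<noteq> j \<and> wP j k k' = -1) = k"
    by (rule some_equality) (auto simp: wP_app ki split: if_splits)
  then show ?thesis using KPj ki by (auto simp: dec_def wP_app)
next
  case (KQ k)
  assume g: "good i j x"
  then have ki: "k \<noteq> i" using KQ by simp
  have "(SOME k'. k' \<noteq> i \<and> wQ i k k' = 1) = k"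
    by (rule some_equality) (auto simp: wQ_app ki split: if_splits)
  then show ?thesis using KQ ki by (auto simp: dec_def wQ_app)
qed

lemma inj_wk: "\<forall>x\<in>K. good i j x \<Longrightarrow> inj_on (wk i j) K"
  by (rule inj_on_inverseI[of _ "dec i j"]) (simp add: dec_wk)


definition NP :: "('p \<Rightarrow> real) set \<Rightarrow> ('p \<Rightarrow> real) \<Rightarrow> bool" where
  "NP W mu \<longleftrightarrow> (\<forall>a\<in>W. \<forall>b\<in>W. (\<lambda>m. a m + b m) \<noteq> (\<lambda>m. -2 * mu m))"

lemma good_valid: "good i j x \<Longrightarrow> valid i j x"
  by (cases x) auto

lemma iso_set:
  fixes h0 :: "('p::{finite,linorder},'r::finite) mat set" and s :: "('p,'r) mat \<Rightarrow> ('p,'r) mat \<Rightarrow> real"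
  assumes subalg: "is_subalg h0" and inv: "bH_invariant h0" and form: "quot_sym_form h0 s"
    and mu_cond: "\<forall>t. \<forall>x\<in>su. \<forall>y\<in>su. s (lbr (aH t) x) y + s x (lbr (aH t) y) = - 2 * pair mu t * s x y"
    and nzi: "\<not> rootspace (\<lambda>m. - alpha i m) \<subseteq> h0"
    and fin: "finite K" and goodK: "\<forall>x\<in>K. good i j x"
    and Zi: "KZ \<in> K \<Longrightarrow> Zi \<in> rootspace (wZ i) \<and> Zi \<notin> h0"
    and Zj: "KZj \<in> K \<Longrightarrow> Zj \<in> rootspace (wZ j) \<and> Zj \<notin> h0"
    and nzj: "\<And>k. KPj k \<in> K \<Longrightarrow> \<not> rootspace (\<lambda>m. - alpha j m) \<subseteq> h0"
    and hq: "\<And>k. KQ k \<in> K \<Longrightarrow> rootspace (\<lambda>m. - alpha k m) \<subseteq> h0"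
    and np: "NP (wk i j ` K) mu"
  shows "has_iso_dim h0 s (card K + card (K \<inter> (range KP \<union> range KPj \<union> range KQ)))"
proof (rule iso_keys[OF subalg inv form mu_cond fin])
  show "K \<inter> (range KP \<union> range KPj \<union> range KQ) \<subseteq> K" by blast
next
  fix x z assume x: "x \<in> K"
  show "Fk i j Zi Zj x z \<in> rootspace (wk i j x)"
    using x Zi Zj goodK by (intro key_root good_valid) auto
next
  fix x a b assume "x \<in> K"
  show "Fk i j Zi Zj x (complex_of_real a * 1 + complex_of_real b * \<i>) =
    a *\<^sub>R Fk i j Zi Zj x 1 + b *\<^sub>R Fk i j Zi Zj x \<i>" by (rule key_lin)
next
  show "inj_on (wk i j) K" using goodK by (rule inj_wk)
next
  fix x z assume x: "x \<in> K" and F: "Fk i j Zi Zj x z \<in> h0"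
    and c: "x \<in> K \<inter> (range KP \<union> range KPj \<union> range KQ) \<or> Im z = 0"
  show "z = 0"
  proof (rule key_grp[OF subalg inv _ _ nzi _ _ _ F])
    show "x = KZ \<Longrightarrow> Zi \<notin> h0" using Zi x by auto
    show "x = KZj \<Longrightarrow> Zj \<notin> h0" using Zj x by auto
    show "valid i j x" using goodK x by (intro good_valid) blast
    show "\<And>k. x = KPj k \<Longrightarrow> \<not> rootspace (\<lambda>m. - alpha j m) \<subseteq> h0" using nzj x by auto
    show "\<And>k. x = KQ k \<Longrightarrow> rootspace (\<lambda>m. - alpha k m) \<subseteq> h0" using hq x by auto
    show "x \<in> range KP \<union> range KPj \<union> range KQ \<or> Im z = 0" using c by auto
  qed
next
  fix x y assume "x \<in> K" "y \<in> K"
  then show "(\<lambda>m. wk i j x m + wk i j y m) \<noteq> (\<lambda>m. - 2 * mu m)"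
    using np unfolding NP_def by auto
qed


definition RR :: "'p key set" where "RR = range KP \<union> range KPj \<union> range KQ"

definition KA :: "'p \<Rightarrow> 'p key set" where "KA i = {KZ, KD} \<union> KP ` {k. k \<noteq> i}"
definition KB :: "'p \<Rightarrow> 'p key set" where "KB i = {KZ, KD} \<union> KQ ` {k. k \<noteq> i}"
definition KC :: "'p \<Rightarrow> 'p key set" where "KC i = {KZ} \<union> KP ` {k. k \<noteq> i} \<union> KQ ` {k. k \<noteq> i}"
definition K0 :: "'p \<Rightarrow> 'p key set" where "K0 i = {KD} \<union> KP ` {k. k \<noteq> i}"
definition KE :: "'p \<Rightarrow> 'p \<Rightarrow> 'p key set" where
  "KE i j = {KZ, KZj, KD} \<union> KP ` {k. k \<noteq> i \<and> k \<noteq> j} \<union> KPj ` {k. k \<noteq> i \<and> k \<noteq> j}"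

lemma card_ne1: "card {k::'p::finite. k \<noteq> i} = CARD('p) - 1"
proof -
  have "{k::'p. k \<noteq> i} = UNIV - {i}" by auto
  then show ?thesis by (simp add: card_Diff_singleton)
qed

lemma card_ne2: "i \<noteq> j \<Longrightarrow> card {k::'p::finite. k \<noteq> i \<and> k \<noteq> j} = CARD('p) - 2"
proof -
  assume ij: "i \<noteq> j"
  have "{k::'p. k \<noteq> i \<and> k \<noteq> j} = UNIV - {i, j}" by auto
  moreover have "card {i, j} = 2" using ij by simp
  ultimately show ?thesis by (simp add: card_Diff_subset)
qed

lemma card_pos: "CARD('p::finite) \<ge> 1"
  using finite_UNIV_card_ge_0[where 'a='p] by simp

lemma inj_KP: "inj_on KP A" "inj_on KPj A" "inj_on KQ A" by (auto simp: inj_on_def)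

lemma card_KA: fixes i :: "'p::finite" shows "card (KA i) + card (KA i \<inter> RR) = 2 * CARD('p::finite)"
proof -
  have a: "KA i \<inter> RR = KP ` {k. k \<noteq> i}" by (auto simp: KA_def RR_def)
  have b: "card (KA i) = 2 + card (KP ` {k. k \<noteq> i})" unfolding KA_def
    by (subst card_Un_disjoint) auto
  show ?thesis unfolding a b card_image[OF inj_KP(1)] card_ne1 using card_pos[where 'p='p] by simp
qed

lemma card_KB: fixes i :: "'p::finite" shows "card (KB i) + card (KB i \<inter> RR) = 2 * CARD('p::finite)"
proof -
  have a: "KB i \<inter> RR = KQ ` {k. k \<noteq> i}" by (auto simp: KB_def RR_def)
  have b: "card (KB i) = 2 + card (KQ ` {k. k \<noteq> i})" unfolding KB_def
    by (subst card_Un_disjoint) auto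
  show ?thesis unfolding a b card_image[OF inj_KP(3)] card_ne1 using card_pos[where 'p='p] by simp
qed

lemma card_K0: fixes i :: "'p::finite" shows "card (K0 i) + card (K0 i \<inter> RR) = 2 * CARD('p::finite) - 1"
proof -
  have a: "K0 i \<inter> RR = KP ` {k. k \<noteq> i}" by (auto simp: K0_def RR_def)
  have b: "card (K0 i) = 1 + card (KP ` {k. k \<noteq> i})" unfolding K0_def
    by (subst card_Un_disjoint) auto
  show ?thesis unfolding a b card_image[OF inj_KP(1)] card_ne1 using card_pos[where 'p='p] by simp
qed

lemma card_KC: fixes i :: "'p::finite" shows "card (KC i) + card (KC i \<inter> RR) = 4 * CARD('p::finite) - 3"
proof -
  have a: "KC i \<inter> RR = KP ` {k. k \<noteq> i} \<union> KQ ` {k. k \<noteq> i}" by (auto simp: KC_def RR_def)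
  have c: "card (KP ` {k. k \<noteq> i} \<union> KQ ` {k. k \<noteq> i}) = card (KP ` {k. k \<noteq> i}) + card (KQ ` {k. k \<noteq> i})"
    by (subst card_Un_disjoint) auto
  have b: "card (KC i) = 1 + card (KP ` {k. k \<noteq> i} \<union> KQ ` {k. k \<noteq> i})" unfolding KC_def Un_assoc
    by (subst card_Un_disjoint) auto
  obtain n where n: "CARD('p) = Suc n" using card_pos[where 'p='p] by (cases "CARD('p)") auto
  show ?thesis unfolding a b c card_image[OF inj_KP(1)] card_image[OF inj_KP(3)] card_ne1 n
    by simp
qed

lemma card_KE: fixes i j :: "'p::finite" shows "i \<noteq> j \<Longrightarrow> card (KE i j) + card (KE i j \<inter> RR) = 4 * CARD('p) - 5"
proof -
  assume ij: "i \<noteq> j"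
  let ?S = "{k. k \<noteq> i \<and> k \<noteq> j}"
  have a: "KE i j \<inter> RR = KP ` ?S \<union> KPj ` ?S" by (auto simp: KE_def RR_def)
  have c: "card (KP ` ?S \<union> KPj ` ?S) = card (KP ` ?S) + card (KPj ` ?S)"
    by (subst card_Un_disjoint) auto
  have b: "card (KE i j) = 3 + card (KP ` ?S \<union> KPj ` ?S)" unfolding KE_def Un_assoc
    by (subst card_Un_disjoint) auto
  have "CARD('p) \<ge> 2"
  proof -
    have "card {i, j} \<le> CARD('p)" by (rule card_mono) auto
    then show ?thesis using ij by simp
  qed
  then show ?thesis unfolding a b c card_image[OF inj_KP(1)] card_image[OF inj_KP(2)] card_ne2[OF ij]
    by simp
qed


lemmas wapp = wZ_app wD_app wP_app wQ_app

lemma NP_I: "(\<And>a b. a \<in> W \<Longrightarrow> b \<in> W \<Longrightarrow> (\<lambda>m. a m + b m) = (\<lambda>m. -2 * mu m) \<Longrightarrow> False) \<Longrightarrow> NP W mu"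
  unfolding NP_def by blast

lemma memA: "a \<in> wk i j ` KA i \<Longrightarrow> a = wZ i \<or> a = wD i \<or> (\<exists>k. k \<noteq> i \<and> a = wP i k)"
  by (auto simp: KA_def)
lemma memB: "a \<in> wk i j ` KB i \<Longrightarrow> a = wZ i \<or> a = wD i \<or> (\<exists>k. k \<noteq> i \<and> a = wQ i k)"
  by (auto simp: KB_def)
lemma memC: "a \<in> wk i j ` KC i \<Longrightarrow> a = wZ i \<or> (\<exists>k. k \<noteq> i \<and> a = wP i k) \<or> (\<exists>k. k \<noteq> i \<and> a = wQ i k)"
  by (auto simp: KC_def)
lemma mem0: "a \<in> wk i j ` K0 i \<Longrightarrow> a = wD i \<or> (\<exists>k. k \<noteq> i \<and> a = wP i k)"
  by (auto simp: K0_def)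
lemma memE: "a \<in> wk i j ` KE i j \<Longrightarrow> a = wZ i \<or> a = wZ j \<or> a = wD i \<or> (\<exists>k. k \<noteq> i \<and> k \<noteq> j \<and> (a = wP i k \<or> a = wP j k))"
  by (auto simp: KE_def)

lemma fc: "(\<lambda>m. a m + b m) = (\<lambda>m. -2 * mu m) \<Longrightarrow> a x + b x = -2 * mu x"
  by (drule fun_cong[of _ _ x]) simp

lemma npA0: "mu i < 1 \<Longrightarrow> NP (wk i j ` KA i) mu"
proof (rule NP_I)
  fix a b assume mu: "mu i < 1" and a: "a \<in> wk i j ` KA i" and b: "b \<in> wk i j ` KA i"
    and e: "(\<lambda>m. a m + b m) = (\<lambda>m. -2 * mu m)"
  have "a i \<le> -1" using memA[OF a] by (auto simp: wapp)
  moreover have "b i \<le> -1" using memA[OF b] by (auto simp: wapp)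
  ultimately show False using fc[OF e, of i] mu by simp
qed

lemma npA1: "k \<noteq> i \<Longrightarrow> mu k < 0 \<Longrightarrow> NP (wk i j ` KA i) mu"
proof (rule NP_I)
  fix a b assume ki: "k \<noteq> i" and mu: "mu k < 0" and a: "a \<in> wk i j ` KA i" and b: "b \<in> wk i j ` KA i"
    and e: "(\<lambda>m. a m + b m) = (\<lambda>m. -2 * mu m)"
  have "a k \<le> 0" using memA[OF a] ki by (auto simp: wapp)
  moreover have "b k \<le> 0" using memA[OF b] ki by (auto simp: wapp)
  ultimately show False using fc[OF e, of k] mu by simp
qed

lemma npA2: "j' \<noteq> i \<Longrightarrow> mu j' > 1 \<Longrightarrow> NP (wk i j ` KA i) mu"
proof (rule NP_I)
  fix a b assume ki: "j' \<noteq> i" and mu: "mu j' > 1" and a: "a \<in> wk i j ` KA i" and b: "b \<in> wk i j ` KA i"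
    and e: "(\<lambda>m. a m + b m) = (\<lambda>m. -2 * mu m)"
  have "a j' \<ge> -1" using memA[OF a] ki by (auto simp: wapp)
  moreover have "b j' \<ge> -1" using memA[OF b] ki by (auto simp: wapp)
  ultimately show False using fc[OF e, of j'] mu by simp
qed

lemma memA_j: "a \<in> wk i j ` KA i \<Longrightarrow> j' \<noteq> i \<Longrightarrow> a j' \<ge> -1 \<and> (a j' = -1 \<longrightarrow> a = wP i j')"
  using memA[of a i j] by (auto simp: wapp split: if_splits)

lemma npA3: "j' \<noteq> i \<Longrightarrow> mu j' = 1 \<Longrightarrow> mu \<noteq> (\<lambda>m. alpha i m + alpha j' m) \<Longrightarrow> NP (wk i j ` KA i) mu"
proof (rule NP_I)
  fix a b assume ki: "j' \<noteq> i" and mu: "mu j' = 1" and mu2: "mu \<noteq> (\<lambda>m. alpha i m + alpha j' m)"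
    and a: "a \<in> wk i j ` KA i" and b: "b \<in> wk i j ` KA i"
    and e: "(\<lambda>m. a m + b m) = (\<lambda>m. -2 * mu m)"
  have "a j' = -1" "b j' = -1" using memA_j[OF a ki] memA_j[OF b ki] fc[OF e, of j'] mu by auto
  then have "a = wP i j'" "b = wP i j'" using memA_j[OF a ki] memA_j[OF b ki] by auto
  then have "mu m = alpha i m + alpha j' m" for m using fc[OF e, of m] by (simp add: wP_def)
  then show False using mu2 by auto
qed

lemma npB: "k \<noteq> i \<Longrightarrow> mu k > 0 \<Longrightarrow> NP (wk i j ` KB i) mu"
proof (rule NP_I)
  fix a b assume ki: "k \<noteq> i" and mu: "mu k > 0" and a: "a \<in> wk i j ` KB i" and b: "b \<in> wk i j ` KB i"
    and e: "(\<lambda>m. a m + b m) = (\<lambda>m. -2 * mu m)"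
  have "a k \<ge> 0" using memB[OF a] ki by (auto simp: wapp)
  moreover have "b k \<ge> 0" using memB[OF b] ki by (auto simp: wapp)
  ultimately show False using fc[OF e, of k] mu by simp
qed

lemma npC: "mu i \<noteq> 1 \<Longrightarrow> NP (wk i j ` KC i) mu"
proof (rule NP_I)
  fix a b assume mu: "mu i \<noteq> 1" and a: "a \<in> wk i j ` KC i" and b: "b \<in> wk i j ` KC i"
    and e: "(\<lambda>m. a m + b m) = (\<lambda>m. -2 * mu m)"
  have "a i = -1" using memC[OF a] by (auto simp: wapp)
  moreover have "b i = -1" using memC[OF b] by (auto simp: wapp)
  ultimately show False using fc[OF e, of i] mu by simp
qed

lemma mem0_props: "a \<in> wk i j ` K0 i \<Longrightarrow> (\<forall>m. a m \<le> 0) \<and> (a i = -2 \<or> (\<exists>k. k \<noteq> i \<and> a i = -1 \<and> a k = -1))"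
  using mem0[of a i j] by (auto simp: wapp)

lemma np0: "mu = alpha i \<Longrightarrow> NP (wk i j ` K0 i) mu"
proof (rule NP_I)
  fix a b assume mu: "mu = alpha i" and a: "a \<in> wk i j ` K0 i" and b: "b \<in> wk i j ` K0 i"
    and e: "(\<lambda>m. a m + b m) = (\<lambda>m. -2 * mu m)"
  have ei: "a i + b i = -2" using fc[OF e, of i] mu by (simp add: alpha_def)
  have ek: "a k + b k = 0" if "k \<noteq> i" for k using fc[OF e, of k] mu that by (simp add: alpha_def)
  show False
  proof (cases "a i = -2")
    case True
    then show ?thesis using ei mem0_props[OF b] by auto
  next
    case False
    then obtain k where k: "k \<noteq> i" "a k = -1" using mem0_props[OF a] by auto
    have "b k \<le> 0" using mem0_props[OF b] by blast
    then show ?thesis using ek[OF k(1)] k(2) by simp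
  qed
qed

lemma memE_props: "a \<in> wk i j ` KE i j \<Longrightarrow> i \<noteq> j \<Longrightarrow> (\<forall>m. a m \<le> 0) \<and>
   ((\<exists>k. k \<noteq> i \<and> k \<noteq> j \<and> a k = -1) \<or> (a j = -1 \<and> a i = 0) \<or> a j = 0)"
  using memE[of a i j] by (auto simp: wapp)

lemma npE: "i \<noteq> j \<Longrightarrow> mu = (\<lambda>m. alpha i m + alpha j m) \<Longrightarrow> NP (wk i j ` KE i j) mu"
proof (rule NP_I)
  fix a b assume ij: "i \<noteq> j" and mu: "mu = (\<lambda>m. alpha i m + alpha j m)"
    and a: "a \<in> wk i j ` KE i j" and b: "b \<in> wk i j ` KE i j"
    and e: "(\<lambda>m. a m + b m) = (\<lambda>m. -2 * mu m)"
  have ei: "a i + b i = -2" using fc[OF e, of i] mu ij by (simp add: alpha_def)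
  have ej: "a j + b j = -2" using fc[OF e, of j] mu ij by (simp add: alpha_def)
  have ek: "a k + b k = 0" if "k \<noteq> i" "k \<noteq> j" for k using fc[OF e, of k] mu that by (simp add: alpha_def)
  have pa: "(\<forall>m. a m \<le> 0) \<and> ((\<exists>k. k \<noteq> i \<and> k \<noteq> j \<and> a k = -1) \<or> (a j = -1 \<and> a i = 0) \<or> a j = 0)"
    by (rule memE_props[OF a ij])
  have pb: "(\<forall>m. b m \<le> 0) \<and> ((\<exists>k. k \<noteq> i \<and> k \<noteq> j \<and> b k = -1) \<or> (b j = -1 \<and> b i = 0) \<or> b j = 0)"
    by (rule memE_props[OF b ij])
  show False
  proof (cases "\<exists>k. k \<noteq> i \<and> k \<noteq> j \<and> (a k = -1 \<or> b k = -1)")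
    case True
    then obtain k where k: "k \<noteq> i" "k \<noteq> j" "a k = -1 \<or> b k = -1" by blast
    have "a k \<le> 0" "b k \<le> 0" using pa pb by blast+
    then show ?thesis using ek[OF k(1,2)] k(3) by auto
  next
    case False
    then have "(a j = -1 \<and> a i = 0) \<or> a j = 0" "(b j = -1 \<and> b i = 0) \<or> b j = 0" using pa pb by auto
    then show ?thesis using ei ej by auto
  qed
qed


lemma isoA:
  fixes h0 :: "('p::{finite,linorder},'r::finite) mat set" and s :: "('p,'r) mat \<Rightarrow> ('p,'r) mat \<Rightarrow> real"
  assumes subalg: "is_subalg h0" and inv: "bH_invariant h0" and form: "quot_sym_form h0 s"
    and mu_cond: "\<forall>t. \<forall>x\<in>su. \<forall>y\<in>su. s (lbr (aH t) x) y + s x (lbr (aH t) y) = - 2 * pair mu t * s x y"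
    and nzi: "\<not> rootspace (\<lambda>m. - alpha i m) \<subseteq> h0"
    and Zi: "Zi \<in> rootspace (wZ i)" "Zi \<notin> h0"
    and np: "NP (wk i i ` KA i) mu"
  shows "has_iso_dim h0 s (2 * CARD('p))"
proof -
  have "has_iso_dim h0 s (card (KA i) + card (KA i \<inter> (range KP \<union> range KPj \<union> range KQ)))"
  proof (rule iso_set[OF subalg inv form mu_cond nzi])
    show "finite (KA i)" by (auto simp: KA_def)
    show "\<forall>x\<in>KA i. good i i x" by (auto simp: KA_def)
    show "KZ \<in> KA i \<Longrightarrow> Zi \<in> rootspace (wZ i) \<and> Zi \<notin> h0" using Zi by auto
    show "KZj \<in> KA i \<Longrightarrow> Zi \<in> rootspace (wZ i) \<and> Zi \<notin> h0" by (auto simp: KA_def)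
    show "\<And>k. KPj k \<in> KA i \<Longrightarrow> \<not> rootspace (\<lambda>m. - alpha i m) \<subseteq> h0" by (auto simp: KA_def)
    show "\<And>k. KQ k \<in> KA i \<Longrightarrow> rootspace (\<lambda>m. - alpha k m) \<subseteq> h0" by (auto simp: KA_def)
    show "NP (wk i i ` KA i) mu" by (rule np)
  qed
  then show ?thesis using card_KA[of i] by (simp add: RR_def)
qed

lemma isoB:
  fixes h0 :: "('p::{finite,linorder},'r::finite) mat set" and s :: "('p,'r) mat \<Rightarrow> ('p,'r) mat \<Rightarrow> real"
  assumes subalg: "is_subalg h0" and inv: "bH_invariant h0" and form: "quot_sym_form h0 s"
    and mu_cond: "\<forall>t. \<forall>x\<in>su. \<forall>y\<in>su. s (lbr (aH t) x) y + s x (lbr (aH t) y) = - 2 * pair mu t * s x y"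
    and nzi: "\<not> rootspace (\<lambda>m. - alpha i m) \<subseteq> h0"
    and Zi: "Zi \<in> rootspace (wZ i)" "Zi \<notin> h0"
    and hq: "\<forall>k. k \<noteq> i \<longrightarrow> rootspace (\<lambda>m. - alpha k m) \<subseteq> h0"
    and np: "NP (wk i i ` KB i) mu"
  shows "has_iso_dim h0 s (2 * CARD('p))"
proof -
  have "has_iso_dim h0 s (card (KB i) + card (KB i \<inter> (range KP \<union> range KPj \<union> range KQ)))"
  proof (rule iso_set[OF subalg inv form mu_cond nzi])
    show "finite (KB i)" by (auto simp: KB_def)
    show "\<forall>x\<in>KB i. good i i x" by (auto simp: KB_def)
    show "KZ \<in> KB i \<Longrightarrow> Zi \<in> rootspace (wZ i) \<and> Zi \<notin> h0" using Zi by auto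
    show "KZj \<in> KB i \<Longrightarrow> Zi \<in> rootspace (wZ i) \<and> Zi \<notin> h0" by (auto simp: KB_def)
    show "\<And>k. KPj k \<in> KB i \<Longrightarrow> \<not> rootspace (\<lambda>m. - alpha i m) \<subseteq> h0" by (auto simp: KB_def)
    show "\<And>k. KQ k \<in> KB i \<Longrightarrow> rootspace (\<lambda>m. - alpha k m) \<subseteq> h0" using hq by (auto simp: KB_def)
    show "NP (wk i i ` KB i) mu" by (rule np)
  qed
  then show ?thesis using card_KB[of i] by (simp add: RR_def)
qed

lemma isoC:
  fixes h0 :: "('p::{finite,linorder},'r::finite) mat set" and s :: "('p,'r) mat \<Rightarrow> ('p,'r) mat \<Rightarrow> real"
  assumes subalg: "is_subalg h0" and inv: "bH_invariant h0" and form: "quot_sym_form h0 s"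
    and mu_cond: "\<forall>t. \<forall>x\<in>su. \<forall>y\<in>su. s (lbr (aH t) x) y + s x (lbr (aH t) y) = - 2 * pair mu t * s x y"
    and nzi: "\<not> rootspace (\<lambda>m. - alpha i m) \<subseteq> h0"
    and Zi: "Zi \<in> rootspace (wZ i)" "Zi \<notin> h0"
    and hq: "\<forall>k. k \<noteq> i \<longrightarrow> rootspace (\<lambda>m. - alpha k m) \<subseteq> h0"
    and np: "NP (wk i i ` KC i) mu"
  shows "has_iso_dim h0 s (4 * CARD('p) - 3)"
proof -
  have "has_iso_dim h0 s (card (KC i) + card (KC i \<inter> (range KP \<union> range KPj \<union> range KQ)))"
  proof (rule iso_set[OF subalg inv form mu_cond nzi])
    show "finite (KC i)" by (auto simp: KC_def)
    show "\<forall>x\<in>KC i. good i i x" by (auto simp: KC_def)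
    show "KZ \<in> KC i \<Longrightarrow> Zi \<in> rootspace (wZ i) \<and> Zi \<notin> h0" using Zi by auto
    show "KZj \<in> KC i \<Longrightarrow> Zi \<in> rootspace (wZ i) \<and> Zi \<notin> h0" by (auto simp: KC_def)
    show "\<And>k. KPj k \<in> KC i \<Longrightarrow> \<not> rootspace (\<lambda>m. - alpha i m) \<subseteq> h0" by (auto simp: KC_def)
    show "\<And>k. KQ k \<in> KC i \<Longrightarrow> rootspace (\<lambda>m. - alpha k m) \<subseteq> h0" using hq by (auto simp: KC_def)
    show "NP (wk i i ` KC i) mu" by (rule np)
  qed
  then show ?thesis using card_KC[of i] by (simp add: RR_def)
qed

lemma iso0:
  fixes h0 :: "('p::{finite,linorder},'r::finite) mat set" and s :: "('p,'r) mat \<Rightarrow> ('p,'r) mat \<Rightarrow> real"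
  assumes subalg: "is_subalg h0" and inv: "bH_invariant h0" and form: "quot_sym_form h0 s"
    and mu_cond: "\<forall>t. \<forall>x\<in>su. \<forall>y\<in>su. s (lbr (aH t) x) y + s x (lbr (aH t) y) = - 2 * pair mu t * s x y"
    and nzi: "\<not> rootspace (\<lambda>m. - alpha i m) \<subseteq> h0"
    and np: "NP (wk i i ` K0 i) mu"
  shows "has_iso_dim h0 s (2 * CARD('p) - 1)"
proof -
  have "has_iso_dim h0 s (card (K0 i) + card (K0 i \<inter> (range KP \<union> range KPj \<union> range KQ)))"
  proof (rule iso_set[OF subalg inv form mu_cond nzi])
    show "finite (K0 i)" by (auto simp: K0_def)
    show "\<forall>x\<in>K0 i. good i i x" by (auto simp: K0_def)
    show "KZ \<in> K0 i \<Longrightarrow> Zi \<in> rootspace (wZ i) \<and> Zi \<notin> h0" by (auto simp: K0_def)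
    show "KZj \<in> K0 i \<Longrightarrow> Zi \<in> rootspace (wZ i) \<and> Zi \<notin> h0" by (auto simp: K0_def)
    show "\<And>k. KPj k \<in> K0 i \<Longrightarrow> \<not> rootspace (\<lambda>m. - alpha i m) \<subseteq> h0" by (auto simp: K0_def)
    show "\<And>k. KQ k \<in> K0 i \<Longrightarrow> rootspace (\<lambda>m. - alpha k m) \<subseteq> h0" by (auto simp: K0_def)
    show "NP (wk i i ` K0 i) mu" by (rule np)
  qed
  then show ?thesis using card_K0[of i] by (simp add: RR_def)
qed

lemma isoE:
  fixes h0 :: "('p::{finite,linorder},'r::finite) mat set" and s :: "('p,'r) mat \<Rightarrow> ('p,'r) mat \<Rightarrow> real"
  assumes subalg: "is_subalg h0" and inv: "bH_invariant h0" and form: "quot_sym_form h0 s"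
    and mu_cond: "\<forall>t. \<forall>x\<in>su. \<forall>y\<in>su. s (lbr (aH t) x) y + s x (lbr (aH t) y) = - 2 * pair mu t * s x y"
    and nzi: "\<not> rootspace (\<lambda>m. - alpha i m) \<subseteq> h0"
    and Zi: "Zi \<in> rootspace (wZ i)" "Zi \<notin> h0"
    and ij: "i \<noteq> j" and nzj: "\<not> rootspace (\<lambda>m. - alpha j m) \<subseteq> h0"
    and Zj: "Zj \<in> rootspace (wZ j)" "Zj \<notin> h0"
    and np: "NP (wk i j ` KE i j) mu"
  shows "has_iso_dim h0 s (4 * CARD('p) - 5)"
proof -
  have "has_iso_dim h0 s (card (KE i j) + card (KE i j \<inter> (range KP \<union> range KPj \<union> range KQ)))"
  proof (rule iso_set[OF subalg inv form mu_cond nzi])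
    show "finite (KE i j)" by (auto simp: KE_def)
    show "\<forall>x\<in>KE i j. good i j x" using ij by (auto simp: KE_def)
    show "KZ \<in> KE i j \<Longrightarrow> Zi \<in> rootspace (wZ i) \<and> Zi \<notin> h0" using Zi by auto
    show "KZj \<in> KE i j \<Longrightarrow> Zj \<in> rootspace (wZ j) \<and> Zj \<notin> h0" using Zj by auto
    show "\<And>k. KPj k \<in> KE i j \<Longrightarrow> \<not> rootspace (\<lambda>m. - alpha j m) \<subseteq> h0" using nzj by auto
    show "\<And>k. KQ k \<in> KE i j \<Longrightarrow> rootspace (\<lambda>m. - alpha k m) \<subseteq> h0" by (auto simp: KE_def)
    show "NP (wk i j ` KE i j) mu" by (rule np)
  qed
  then show ?thesis using card_KE[OF ij] by (simp add: RR_def)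
qed


theorem mainTheorem7:
  fixes h0 :: "('p::{finite,linorder}, 'r::finite) mat set"
    and s :: "('p, 'r) mat \<Rightarrow> ('p, 'r) mat \<Rightarrow> real"
    and mu :: "'p \<Rightarrow> real"
    and i :: 'p
  assumes subalg: "is_subalg h0"
    and inv: "bH_invariant h0"
    and form: "quot_sym_form h0 s"
    and mu_cond: "\<forall>t. \<forall>x\<in>su. \<forall>y\<in>su.
        s (lbr (aH t) x) y + s x (lbr (aH t) y) = - 2 * pair mu t * s x y"
    and nz_i: "\<not> rootspace (\<lambda>m. - alpha i m) \<subseteq> h0"
  shows
    "(CARD('p) > 1 \<and> (\<exists>j. j \<noteq> i \<and> \<not> rootspace (\<lambda>m. - alpha j m) \<subseteq> h0) \<longrightarrow>
        (\<exists>d. d > 2 * CARD('p) - 1 \<and> has_iso_dim h0 s d)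
        \<or> (CARD('p) = 2 \<and> mu = (\<lambda>m. 1) \<and> has_iso_dim h0 s 3))
   \<and> (CARD('p) > 1 \<and> (\<forall>j. j \<noteq> i \<longrightarrow> rootspace (\<lambda>m. - alpha j m) \<subseteq> h0) \<longrightarrow>
        (\<exists>d. d \<ge> 2 * CARD('p) - 1 \<and> has_iso_dim h0 s d)
        \<and> ((has_iso_dim h0 s (2 * CARD('p) - 1) \<and> (\<forall>d. has_iso_dim h0 s d \<longrightarrow> d \<le> 2 * CARD('p) - 1))
            \<longrightarrow> (\<exists>a'. (\<forall>m. 2 * mu m = 2 * alpha i m + a' m) \<and>
                   (a' = (\<lambda>m. 0) \<or> (\<exists>j. j \<noteq> i \<and> a' = alpha j)
                    \<or> (\<exists>j k. j \<noteq> i \<and> k \<noteq> i \<and> a' = (\<lambda>m. alpha j m + alpha k m))))))"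
proof -
  obtain Zi where Zi: "Zi \<in> rootspace (wZ i)" "Zi \<notin> h0" using nz_i by (auto simp: wZ_def)
  note hyps = subalg inv form mu_cond
  have P1: "(\<exists>d. d > 2 * CARD('p) - 1 \<and> has_iso_dim h0 s d)
        \<or> (CARD('p) = 2 \<and> mu = (\<lambda>m. 1) \<and> has_iso_dim h0 s 3)"
    if p1: "CARD('p) > 1" and j: "j \<noteq> i" and nzj: "\<not> rootspace (\<lambda>m. - alpha j m) \<subseteq> h0" for j
  proof -
    obtain Zj where Zj: "Zj \<in> rootspace (wZ j)" "Zj \<notin> h0" using nzj by (auto simp: wZ_def)
    have gt: "2 * CARD('p) > 2 * CARD('p) - 1" using p1 by simp
    consider (c1) "mu j < 1" | (c2) "mu j > 1" | (c3) "mu j = 1" "mu \<noteq> (\<lambda>m. alpha i m + alpha j m)"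
      | (c4) "mu = (\<lambda>m. alpha i m + alpha j m)"
      by (cases "mu j < 1"; cases "mu j > 1"; cases "mu = (\<lambda>m. alpha i m + alpha j m)") auto
    then show ?thesis
    proof cases
      case c1
      have "has_iso_dim h0 s (2 * CARD('p))"
        by (rule isoA[OF hyps nzj Zj npA0[where i=j and j=j and mu=mu, OF c1]])
      then show ?thesis using gt by blast
    next
      case c2
      have "has_iso_dim h0 s (2 * CARD('p))"
        by (rule isoA[OF hyps nz_i Zi npA2[where j'=j and i=i and j=i and mu=mu, OF j c2]])
      then show ?thesis using gt by blast
    next
      case c3
      have "has_iso_dim h0 s (2 * CARD('p))"
        by (rule isoA[OF hyps nz_i Zi npA3[where j'=j and i=i and j=i and mu=mu, OF j c3]])
      then show ?thesis using gt by blast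
    next
      case c4
      have ij: "i \<noteq> j" using j by simp
      have E: "has_iso_dim h0 s (4 * CARD('p) - 5)"
        by (rule isoE[OF hyps nz_i Zi ij nzj Zj npE[where i=i and j=j and mu=mu, OF ij c4]])
      have c2': "CARD('p) \<ge> 2"
      proof -
        have "card {i, j} \<le> CARD('p)" by (rule card_mono) auto
        then show ?thesis using ij by simp
      qed
      show ?thesis
      proof (cases "CARD('p) = 2")
        case True
        have "UNIV = {i, j}"
        proof -
          have "{i, j} \<subseteq> (UNIV :: 'p set)" by simp
          moreover have "card {i, j} = CARD('p)" using True ij by simp
          ultimately have "{i, j} = (UNIV :: 'p set)" by (intro card_subset_eq) auto
          then show ?thesis by simp
        qed
        then have "mu m = 1" for m using c4 ij
          by (metis UNIV_I alpha_def insert_iff singletonD add.right_neutral add.left_neutral)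
        then have "mu = (\<lambda>m. 1)" by auto
        then show ?thesis using True E by auto
      next
        case False
        then have "4 * CARD('p) - 5 > 2 * CARD('p) - 1" using c2' by simp
        then show ?thesis using E by blast
      qed
    qed
  qed
  have P2: "(\<exists>d. d \<ge> 2 * CARD('p) - 1 \<and> has_iso_dim h0 s d)
        \<and> ((has_iso_dim h0 s (2 * CARD('p) - 1) \<and> (\<forall>d. has_iso_dim h0 s d \<longrightarrow> d \<le> 2 * CARD('p) - 1))
            \<longrightarrow> (\<exists>a'. (\<forall>m. 2 * mu m = 2 * alpha i m + a' m) \<and>
                   (a' = (\<lambda>m. 0) \<or> (\<exists>j. j \<noteq> i \<and> a' = alpha j)
                    \<or> (\<exists>j k. j \<noteq> i \<and> k \<noteq> i \<and> a' = (\<lambda>m. alpha j m + alpha k m)))))"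
    if p1: "CARD('p) > 1" and hj: "\<forall>j. j \<noteq> i \<longrightarrow> rootspace (\<lambda>m. - alpha j m) \<subseteq> h0"
  proof -
    have big: "\<exists>d. d \<ge> 2 * CARD('p) \<and> has_iso_dim h0 s d" if ne: "mu \<noteq> alpha i"
    proof -
      consider (a) "mu i \<noteq> 1" | (b) "\<exists>k. k \<noteq> i \<and> mu k < 0" | (c) "\<exists>k. k \<noteq> i \<and> mu k > 0"
      proof -
        assume a: "mu i \<noteq> 1 \<Longrightarrow> thesis" and b: "\<exists>k. k \<noteq> i \<and> mu k < 0 \<Longrightarrow> thesis"
          and c: "\<exists>k. k \<noteq> i \<and> mu k > 0 \<Longrightarrow> thesis"
        show thesis
        proof (rule ccontr)
          assume nt: "\<not> thesis"
          have "mu m = alpha i m" for m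
          proof (cases "m = i")
            case True
            have "mu i = 1" using a nt by blast
            then show ?thesis using True by (simp add: alpha_def)
          next
            case False
            then have "\<not> mu m < 0" "\<not> mu m > 0" using b c nt by auto
            then show ?thesis using False by (simp add: alpha_def)
          qed
          then show False using ne by auto
        qed
      qed
      then show ?thesis
      proof cases
        case a
        have "has_iso_dim h0 s (4 * CARD('p) - 3)" by (rule isoC[OF hyps nz_i Zi hj npC[where i=i and j=i and mu=mu, OF a]])
        moreover have "4 * CARD('p) - 3 \<ge> 2 * CARD('p)" using p1 by simp
        ultimately show ?thesis by blast
      next
        case b
        then obtain k where k: "k \<noteq> i" "mu k < 0" by blast
        have "has_iso_dim h0 s (2 * CARD('p))" by (rule isoA[OF hyps nz_i Zi npA1[where k=k and i=i and j=i and mu=mu, OF k]])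
        then show ?thesis by blast
      next
        case c
        then obtain k where k: "k \<noteq> i" "mu k > 0" by blast
        have "has_iso_dim h0 s (2 * CARD('p))" by (rule isoB[OF hyps nz_i Zi hj npB[where k=k and i=i and j=i and mu=mu, OF k]])
        then show ?thesis by blast
      qed
    qed
    have first: "\<exists>d. d \<ge> 2 * CARD('p) - 1 \<and> has_iso_dim h0 s d"
    proof (cases "mu = alpha i")
      case True
      have "has_iso_dim h0 s (2 * CARD('p) - 1)" by (rule iso0[OF hyps nz_i np0[where i=i and j=i and mu=mu, OF True]])
      then show ?thesis by blast
    next
      case False
      then show ?thesis using big by fastforce
    qed
    have second: "\<exists>a'. (\<forall>m. 2 * mu m = 2 * alpha i m + a' m) \<and>
                   (a' = (\<lambda>m. 0) \<or> (\<exists>j. j \<noteq> i \<and> a' = alpha j)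
                    \<or> (\<exists>j k. j \<noteq> i \<and> k \<noteq> i \<and> a' = (\<lambda>m. alpha j m + alpha k m)))"
      if mx: "\<forall>d. has_iso_dim h0 s d \<longrightarrow> d \<le> 2 * CARD('p) - 1"
    proof -
      have "mu = alpha i"
      proof (rule ccontr)
        assume "mu \<noteq> alpha i"
        then obtain d where "d \<ge> 2 * CARD('p)" "has_iso_dim h0 s d" using big by blast
        then show False using mx p1 by force
      qed
      then show ?thesis by (intro exI[of _ "\<lambda>m. 0"]) simp
    qed
    show ?thesis using first second by blast
  qed
  show ?thesis using P1 P2 by blast
qed

end
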